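(* Let $(G,\Omega)$ be an ample transitive $\ell$-permutation group. Then $T$ has a minimal element $\Delta$ with $(G(\Delta),\pi(\Delta))$ of type (I) if and only if there is $h_1\in G$, $h_1>1$, such that $[a,b]=1$ for all $a,b\in G$ with $|a|\vee|b|\leqslant h_1$.
   Context: An $\ell$-permutation group $(G,\Omega)$: a totally ordered set $\Omega$ with a subgroup $G$ of $\mathrm{Aut}(\Omega,\leqslant)$ (right action) closed under pointwise max and min; transitive if $G$ is transitive on $\Omega$. $|g|=g\vee g^{-1}$; $g\le h$ is the pointwise order. A convex congruence is a $G$-invariant equivalence relation with convex classes. For $\alpha\neq\beta$, $V(\alpha,\beta)$ (resp. $U(\alpha,\beta)$) is the intersection (resp. union) of all convex congruences in which $\alpha,\beta$ lie in the same (resp. different) classes. $T$ is the set of all classes of the congruences $V(\alpha,\beta)$, partially ordered by inclusion; for $\Delta\in T$, $\kappa(\Delta)=V(\alpha,\beta)$ is the congruence having $\Delta$ as a class and $\pi(\Delta)$ is the set of $U(\alpha,\beta)$-classes inside $\Delta$, ordered by $\Omega$. $\mathrm{st}(\Delta)=\{g:\Delta g=\Delta\}$, $\mathrm{rst}(\Delta)=\{g:\mathrm{supp}(g)\subseteq\Delta\}$, $Q_\Delta=\{h\in\mathrm{rst}(\Delta):\exists\alpha\in\Delta,\ V(\alpha,\alpha h)=\kappa(\Delta)\}$; ample means $Q_\Delta\ne\emptyset$ for all $\Delta$. $G(\Delta)$ is the group of permutations of $\pi(\Delta)$ induced by $\mathrm{st}(\Delta)$; it is transitive and o-primitive. A transitive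 o-primitive $\ell$-permutation group is of type (I) if the ordered set is order-isomorphic to a subgroup of $\mathbb R$ and the group acts as its right regular representation (equivalently, the group is abelian). *)

theory Defs
  imports Main "HOL-Library.FuncSet" Complex_Main
begin

text \<open>The totally ordered set Omega is the whole type 'a (class linorder).
  Group elements are functions 'a => 'a; the (right) action of g on alpha is g alpha.\<close>

definition order_aut :: "('a::linorder \<Rightarrow> 'a) \<Rightarrow> bool" where
  "order_aut f \<longleftrightarrow> bij f \<and> (\<forall>x y. x \<le> y \<longleftrightarrow> f x \<le> f y)"

definition l_perm_group :: "('a::linorder \<Rightarrow> 'a) set \<Rightarrow> bool" where
  "l_perm_group G \<longleftrightarrow>
     (\<forall>g\<in>G. order_aut g) \<and> id \<in> G \<and>
     (\<forall>f\<in>G. \<forall>g\<in>G. f \<circ> g \<in> G) \<and> (\<forall>g\<in>G. inv g \<in> G) \<and>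
     (\<forall>f\<in>G. \<forall>g\<in>G. (\<lambda>x. max (f x) (g x)) \<in> G \<and> (\<lambda>x. min (f x) (g x)) \<in> G)"

definition transitive_grp :: "('a \<Rightarrow> 'a) set \<Rightarrow> bool" where
  "transitive_grp G \<longleftrightarrow> (\<forall>\<alpha> \<beta>. \<exists>g\<in>G. g \<alpha> = \<beta>)"

definition pw_le :: "('a::linorder \<Rightarrow> 'a) \<Rightarrow> ('a \<Rightarrow> 'a) \<Rightarrow> bool" where
  "pw_le f g \<longleftrightarrow> (\<forall>x. f x \<le> g x)"

definition pw_abs :: "('a::linorder \<Rightarrow> 'a) \<Rightarrow> ('a \<Rightarrow> 'a)" where
  "pw_abs g = (\<lambda>x. max (g x) (inv g x))"

definition pw_join :: "('a::linorder \<Rightarrow> 'a) \<Rightarrow> ('a \<Rightarrow> 'a) \<Rightarrow> ('a \<Rightarrow> 'a)" where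
  "pw_join f g = (\<lambda>x. max (f x) (g x))"

definition convex_congruence :: "('a::linorder \<Rightarrow> 'a) set \<Rightarrow> ('a \<times> 'a) set \<Rightarrow> bool" where
  "convex_congruence G R \<longleftrightarrow> equiv UNIV R \<and>
     (\<forall>g\<in>G. \<forall>x y. (x, y) \<in> R \<longrightarrow> (g x, g y) \<in> R) \<and>
     (\<forall>x y z. (x, y) \<in> R \<and> x \<le> z \<and> z \<le> y \<longrightarrow> (x, z) \<in> R)"

definition Vcong :: "('a::linorder \<Rightarrow> 'a) set \<Rightarrow> 'a \<Rightarrow> 'a \<Rightarrow> ('a \<times> 'a) set" where
  "Vcong G \<alpha> \<beta> = \<Inter> {R. convex_congruence G R \<and> (\<alpha>, \<beta>) \<in> R}"

definition Ucong :: "('a::linorder \<Rightarrow> 'a) set \<Rightarrow> 'a \<Rightarrow> 'a \<Rightarrow> ('a \<times> 'a) set" where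
  "Ucong G \<alpha> \<beta> = \<Union> {R. convex_congruence G R \<and> (\<alpha>, \<beta>) \<notin> R}"

definition Tset :: "('a::linorder \<Rightarrow> 'a) set \<Rightarrow> 'a set set" where
  "Tset G = {Vcong G \<alpha> \<beta> `` {\<gamma>} | \<alpha> \<beta> \<gamma>. \<alpha> \<noteq> \<beta>}"

definition wpair :: "('a::linorder \<Rightarrow> 'a) set \<Rightarrow> 'a set \<Rightarrow> 'a \<times> 'a" where
  "wpair G \<Delta> = (SOME p. fst p \<noteq> snd p \<and> \<Delta> \<in> UNIV // Vcong G (fst p) (snd p))"

definition kappa :: "('a::linorder \<Rightarrow> 'a) set \<Rightarrow> 'a set \<Rightarrow> ('a \<times> 'a) set" where
  "kappa G \<Delta> = Vcong G (fst (wpair G \<Delta>)) (snd (wpair G \<Delta>))"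

definition piset :: "('a::linorder \<Rightarrow> 'a) set \<Rightarrow> 'a set \<Rightarrow> 'a set set" where
  "piset G \<Delta> = {C \<in> UNIV // Ucong G (fst (wpair G \<Delta>)) (snd (wpair G \<Delta>)). C \<subseteq> \<Delta>}"

definition set_less :: "'a::linorder set \<Rightarrow> 'a set \<Rightarrow> bool" where
  "set_less C D \<longleftrightarrow> C \<noteq> D \<and> (\<forall>x\<in>C. \<forall>y\<in>D. x < y)"

definition stab :: "('a \<Rightarrow> 'a) set \<Rightarrow> 'a set \<Rightarrow> ('a \<Rightarrow> 'a) set" where
  "stab G \<Delta> = {g \<in> G. g ` \<Delta> = \<Delta>}"

definition rstab :: "('a \<Rightarrow> 'a) set \<Rightarrow> 'a set \<Rightarrow> ('a \<Rightarrow> 'a) set" where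
  "rstab G \<Delta> = {g \<in> G. {x. g x \<noteq> x} \<subseteq> \<Delta>}"

definition Qset :: "('a::linorder \<Rightarrow> 'a) set \<Rightarrow> 'a set \<Rightarrow> ('a \<Rightarrow> 'a) set" where
  "Qset G \<Delta> = {h \<in> rstab G \<Delta>. \<exists>\<alpha>\<in>\<Delta>. Vcong G \<alpha> (h \<alpha>) = kappa G \<Delta>}"

definition ample :: "('a::linorder \<Rightarrow> 'a) set \<Rightarrow> bool" where
  "ample G \<longleftrightarrow> (\<forall>\<Delta>\<in>Tset G. Qset G \<Delta> \<noteq> {})"

definition induced_grp :: "('a::linorder \<Rightarrow> 'a) set \<Rightarrow> 'a set \<Rightarrow> ('a set \<Rightarrow> 'a set) set" where
  "induced_grp G \<Delta> = {restrict (\<lambda>C. g ` C) (piset G \<Delta>) | g. g \<in> stab G \<Delta>}"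

text \<open>type (I): the ordered set P is order-isomorphic (via phi) to a subgroup A of (R,+)
  and the group Gp acts as the right regular representation of A.\<close>
definition type_I :: "'b set \<Rightarrow> ('b \<Rightarrow> 'b \<Rightarrow> bool) \<Rightarrow> ('b \<Rightarrow> 'b) set \<Rightarrow> bool" where
  "type_I P lss Gp \<longleftrightarrow> (\<exists>(A::real set) \<phi>.
     0 \<in> A \<and> (\<forall>a\<in>A. \<forall>b\<in>A. a + b \<in> A) \<and> (\<forall>a\<in>A. - a \<in> A) \<and>
     bij_betw \<phi> P A \<and> (\<forall>C\<in>P. \<forall>D\<in>P. lss C D \<longleftrightarrow> \<phi> C < \<phi> D) \<and>
     (\<forall>f\<in>Gp. \<exists>a\<in>A. \<forall>C\<in>P. f C \<in> P \<and> \<phi> (f C) = \<phi> C + a) \<and>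
     (\<forall>a\<in>A. \<exists>f\<in>Gp. \<forall>C\<in>P. f C \<in> P \<and> \<phi> (f C) = \<phi> C + a))"

end

theory Submission
  imports Defs
begin


locale lpg =
  fixes G :: "('a::linorder \<Rightarrow> 'a) set"
  assumes lpg: "l_perm_group G" and tr: "transitive_grp G"
begin

lemma oa: "g \<in> G \<Longrightarrow> order_aut g"
  using lpg unfolding l_perm_group_def by blast

lemma bijG: "g \<in> G \<Longrightarrow> bij g"
  using oa unfolding order_aut_def by blast

lemma le_iff: "g \<in> G \<Longrightarrow> (g x \<le> g y) = (x \<le> y)"
  using oa unfolding order_aut_def by blast

lemma eq_iff: "g \<in> G \<Longrightarrow> (g x = g y) = (x = y)"
  by (metis antisym le_iff order_refl)

lemma less_iff: "g \<in> G \<Longrightarrow> (g x < g y) = (x < y)"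
  by (simp add: less_le le_iff eq_iff)

lemma idG[simp]: "id \<in> G"
  using lpg unfolding l_perm_group_def by blast

lemma idG'[simp]: "(\<lambda>x. x) \<in> G"
  using idG by (simp add: id_def)

lemma compG[simp]: "f \<in> G \<Longrightarrow> g \<in> G \<Longrightarrow> f \<circ> g \<in> G"
  using lpg unfolding l_perm_group_def by blast

lemma compG'[simp]: "f \<in> G \<Longrightarrow> g \<in> G \<Longrightarrow> (\<lambda>x. f (g x)) \<in> G"
  using compG unfolding comp_def by blast

lemma invG[simp]: "g \<in> G \<Longrightarrow> inv g \<in> G"
  using lpg unfolding l_perm_group_def by blast

lemma maxG[simp]: "f \<in> G \<Longrightarrow> g \<in> G \<Longrightarrow> (\<lambda>x. max (f x) (g x)) \<in> G"
  using lpg unfolding l_perm_group_def by blast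

lemma minG[simp]: "f \<in> G \<Longrightarrow> g \<in> G \<Longrightarrow> (\<lambda>x. min (f x) (g x)) \<in> G"
  using lpg unfolding l_perm_group_def by blast

lemma inv1[simp]: "g \<in> G \<Longrightarrow> inv g (g x) = x"
  using bijG bij_is_inj inv_f_f by metis

lemma inv2[simp]: "g \<in> G \<Longrightarrow> g (inv g x) = x"
  using bijG bij_is_surj surj_f_inv_f by metis

lemma inv_inv[simp]: "g \<in> G \<Longrightarrow> inv (inv g) = g"
  using bijG inv_inv_eq by metis

lemma inv_le: "g \<in> G \<Longrightarrow> (inv g x \<le> y) = (x \<le> g y)"
  using le_iff[of g "inv g x" y] by simp

lemma le_inv: "g \<in> G \<Longrightarrow> (y \<le> inv g x) = (g y \<le> x)"
  using le_iff[of g y "inv g x"] by simp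

lemma trans_ex: "\<exists>g\<in>G. g a = b"
  using tr unfolding transitive_grp_def by blast

lemma powG[simp]: "f \<in> G \<Longrightarrow> f ^^ n \<in> G"
  by (induct n) auto

lemma img_conv: "g \<in> G \<Longrightarrow> x \<in> g ` A \<longleftrightarrow> inv g x \<in> A"
proof
  assume "g \<in> G" "x \<in> g ` A" thus "inv g x \<in> A" by auto
next
  assume g: "g \<in> G" and "inv g x \<in> A"
  hence "g (inv g x) \<in> g ` A" by blast
  thus "x \<in> g ` A" using g by simp
qed

lemma cc_equiv: "convex_congruence G R \<Longrightarrow> equiv UNIV R"
  unfolding convex_congruence_def by blast
lemma cc_refl: "convex_congruence G R \<Longrightarrow> (x,x) \<in> R"
  using cc_equiv equiv_def refl_onD by (metis UNIV_I)
lemma cc_sym: "convex_congruence G R \<Longrightarrow> (x,y) \<in> R \<Longrightarrow> (y,x) \<in> R"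
  using cc_equiv equiv_def symD by metis
lemma cc_trans: "convex_congruence G R \<Longrightarrow> (x,y) \<in> R \<Longrightarrow> (y,z) \<in> R \<Longrightarrow> (x,z) \<in> R"
  using cc_equiv equiv_def transD by metis
lemma cc_inv: "convex_congruence G R \<Longrightarrow> g \<in> G \<Longrightarrow> (x,y) \<in> R \<Longrightarrow> (g x, g y) \<in> R"
  unfolding convex_congruence_def by blast
lemma cc_conv0: "convex_congruence G R \<Longrightarrow> (x,y) \<in> R \<Longrightarrow> x \<le> z \<Longrightarrow> z \<le> y \<Longrightarrow> (x,z) \<in> R"
  unfolding convex_congruence_def by blast
lemma cc_conv: "convex_congruence G R \<Longrightarrow> (x,y) \<in> R \<Longrightarrow> min x y \<le> z \<Longrightarrow> z \<le> max x y \<Longrightarrow> (x,z) \<in> R"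
proof -
  assume c: "convex_congruence G R" and r: "(x,y) \<in> R" and a: "min x y \<le> z" "z \<le> max x y"
  show ?thesis
  proof (cases "x \<le> y")
    case True thus ?thesis using cc_conv0[OF c r] a by simp
  next
    case False
    hence "(y,z) \<in> R" using cc_conv0[OF c cc_sym[OF c r]] a by simp
    thus ?thesis using cc_trans[OF c r] by blast
  qed
qed

lemma cc_inv_iff: "convex_congruence G R \<Longrightarrow> g \<in> G \<Longrightarrow> (g x, g y) \<in> R \<longleftrightarrow> (x,y) \<in> R"
  by (metis cc_inv inv1 invG)

lemma cc_Id: "convex_congruence G Id"
  unfolding convex_congruence_def by (auto simp: equiv_def refl_on_def sym_def trans_def dest: antisym)

lemma cc_UNIV: "convex_congruence G UNIV"
  unfolding convex_congruence_def by (auto simp: equiv_def refl_on_def sym_def trans_def)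

lemma Inter_equiv: assumes "\<And>R. R \<in> F \<Longrightarrow> equiv UNIV R" shows "equiv UNIV (\<Inter>F)"
proof (rule equivI)
  have r: "(x,x) \<in> R" if "R \<in> F" for x R using assms[OF that] unfolding equiv_def refl_on_def by blast
  have s: "(y,x) \<in> R" if "R \<in> F" "(x,y) \<in> R" for x y R
    using assms[OF that(1)] that(2) unfolding equiv_def sym_def by blast
  have t: "(x,z) \<in> R" if "R \<in> F" "(x,y) \<in> R" "(y,z) \<in> R" for x y z R
    using assms[OF that(1)] that(2,3) unfolding equiv_def trans_def by blast
  show "refl (\<Inter>F)" unfolding refl_on_def using r by blast
  show "\<Inter>F \<subseteq> UNIV \<times> UNIV" by simp
  show "sym (\<Inter>F)" unfolding sym_def using s by blast
  show "trans (\<Inter>F)" unfolding trans_def using t by blast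
qed

lemma Vcong_cc: "convex_congruence G (Vcong G a b)"
proof -
  let ?F = "{R. convex_congruence G R \<and> (a, b) \<in> R}"
  have e: "equiv UNIV (\<Inter>?F)" by (rule Inter_equiv) (auto dest: cc_equiv)
  have i: "\<forall>g\<in>G. \<forall>x y. (x,y) \<in> \<Inter>?F \<longrightarrow> (g x, g y) \<in> \<Inter>?F"
    using cc_inv by blast
  have c: "\<forall>x y z. (x, y) \<in> \<Inter>?F \<and> x \<le> z \<and> z \<le> y \<longrightarrow> (x,z) \<in> \<Inter>?F"
    using cc_conv0 by blast
  have "convex_congruence G (\<Inter>?F)" unfolding convex_congruence_def[of G "\<Inter>?F"] using e i c by blast
  thus ?thesis unfolding Vcong_def .
qed

lemma Vcong_mem: "(a,b) \<in> Vcong G a b"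
  unfolding Vcong_def by blast

lemma Vcong_least: "convex_congruence G R \<Longrightarrow> (a,b) \<in> R \<Longrightarrow> Vcong G a b \<subseteq> R"
  unfolding Vcong_def by blast

lemma Vcong_same: "(x,y) \<in> Vcong G a a \<Longrightarrow> x = y"
  using Vcong_least[OF cc_Id, of a a] by auto

lemma class_img: "convex_congruence G R \<Longrightarrow> g \<in> G \<Longrightarrow> R `` {g x} = g ` (R `` {x})"
proof (rule set_eqI)
  fix y assume c: "convex_congruence G R" and g: "g \<in> G"
  have "(g x, y) \<in> R \<longleftrightarrow> (g x, g (inv g y)) \<in> R" using g by simp
  also have "\<dots> \<longleftrightarrow> (x, inv g y) \<in> R" using cc_inv_iff[OF c g] by simp
  finally show "y \<in> R `` {g x} \<longleftrightarrow> y \<in> g ` (R `` {x})" using g img_conv by auto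
qed

lemma class_chain_aux:
  assumes R: "convex_congruence G R" and S: "convex_congruence G S"
    and b1: "(a,b) \<in> R" and b2: "(a,b) \<notin> S" and c1: "(a,c) \<in> S" and c2: "(a,c) \<notin> R"
  shows False
proof -
  obtain g where g: "g \<in> G" "g a = b" using trans_ex by blast
  have gc_notR: "(a, g c) \<notin> R"
  proof
    assume "(a, g c) \<in> R"
    hence "(b, g c) \<in> R" using cc_trans[OF R cc_sym[OF R b1]] by blast
    hence "(g a, g c) \<in> R" using g by simp
    thus False using c2 cc_inv_iff[OF R g(1)] by blast
  qed
  have bgc: "(b, g c) \<in> S" using cc_inv[OF S g(1) c1] g by simp
  have "a \<noteq> b" using b2 cc_refl[OF S] by blast
  have "a \<noteq> c" using c2 cc_refl[OF R] by blast
  show False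
  proof (cases "a < b")
    case True
    have "c < a"
    proof (rule ccontr)
      assume "\<not> c < a" hence "a < c" using \<open>a \<noteq> c\<close> by simp
      show False
      proof (cases "b \<le> c")
        case True thus False using cc_conv0[OF S c1, of b] \<open>a < b\<close> b2 by (meson less_imp_le)
      next
        case False thus False using cc_conv0[OF R b1, of c] \<open>a < c\<close> c2 by (meson less_imp_le not_le)
      qed
    qed
    hence gcb: "g c < b" using g less_iff[of g c a] by simp
    have "a < g c"
    proof (rule ccontr)
      assume "\<not> a < g c"
      hence "(g c, a) \<in> S" using cc_conv0[OF S cc_sym[OF S bgc], of a] \<open>a < b\<close> by simp
      hence "(b, a) \<in> S" using cc_trans[OF S bgc] by blast
      thus False using b2 cc_sym[OF S] by blast
    qed
    thus False using cc_conv0[OF R b1, of "g c"] gcb gc_notR by (meson less_imp_le)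
  next
    case False hence "b < a" using \<open>a \<noteq> b\<close> by simp
    have "a < c"
    proof (rule ccontr)
      assume "\<not> a < c" hence "c < a" using \<open>a \<noteq> c\<close> by simp
      show False
      proof (cases "c \<le> b")
        case True
        have "(c, a) \<in> S" using cc_sym[OF S c1] .
        hence "(c, b) \<in> S" using cc_conv0[OF S, of c a b] True \<open>b < a\<close> by simp
        thus False using b2 cc_trans[OF S c1] by blast
      next
        case False
        have "(b, a) \<in> R" using cc_sym[OF R b1] .
        hence "(b, c) \<in> R" using cc_conv0[OF R, of b a c] False \<open>c < a\<close> by simp
        thus False using c2 cc_trans[OF R b1] by blast
      qed
    qed
    hence gcb: "b < g c" using g less_iff[of g a c] by simp
    have "g c < a"
    proof (rule ccontr)
      assume "\<not> g c < a"
      hence "(b, a) \<in> S" using cc_conv0[OF S bgc, of a] \<open>b < a\<close> by simp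
      thus False using b2 cc_sym[OF S] by blast
    qed
    have "(b, g c) \<in> R" using cc_conv0[OF R cc_sym[OF R b1], of "g c"] gcb \<open>g c < a\<close> by simp
    thus False using gc_notR cc_trans[OF R b1] by blast
  qed
qed

lemma chain: assumes R: "convex_congruence G R" and S: "convex_congruence G S"
  shows "R \<subseteq> S \<or> S \<subseteq> R"
proof -
  fix a :: 'a
  have "R `` {a} \<subseteq> S `` {a} \<or> S `` {a} \<subseteq> R `` {a}"
    using class_chain_aux[OF R S] by blast
  thus ?thesis
  proof
    assume h: "R `` {a} \<subseteq> S `` {a}"
    have "R \<subseteq> S"
    proof
      fix p assume "p \<in> R"
      then obtain u v where p: "p = (u,v)" "(u,v) \<in> R" by (cases p) auto
      obtain g where g: "g \<in> G" "g a = u" using trans_ex by blast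
      have "v \<in> R `` {g a}" using p g by simp
      also have "\<dots> = g ` (R `` {a})" using class_img[OF R g(1)] .
      also have "\<dots> \<subseteq> g ` (S `` {a})" using h by blast
      also have "\<dots> = S `` {g a}" using class_img[OF S g(1)] by simp
      finally show "p \<in> S" using p g by simp
    qed
    thus ?thesis by blast
  next
    assume h: "S `` {a} \<subseteq> R `` {a}"
    have "S \<subseteq> R"
    proof
      fix p assume "p \<in> S"
      then obtain u v where p: "p = (u,v)" "(u,v) \<in> S" by (cases p) auto
      obtain g where g: "g \<in> G" "g a = u" using trans_ex by blast
      have "v \<in> S `` {g a}" using p g by simp
      also have "\<dots> = g ` (S `` {a})" using class_img[OF S g(1)] .
      also have "\<dots> \<subseteq> g ` (R `` {a})" using h by blast
      also have "\<dots> = R `` {g a}" using class_img[OF R g(1)] by simp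
      finally show "p \<in> R" using p g by simp
    qed
    thus ?thesis by blast
  qed
qed

lemma same_class_eq:
  assumes R: "convex_congruence G R" and S: "convex_congruence G S" and e: "R `` {x} = S `` {x}"
  shows "R = S"
proof -
  have "R \<subseteq> S" if R: "convex_congruence G R" and S: "convex_congruence G S" and e: "R `` {x} = S `` {x}" for R S
  proof
    fix p assume "p \<in> R"
    then obtain u v where p: "p = (u,v)" "(u,v) \<in> R" by (cases p) auto
    obtain g where g: "g \<in> G" "g x = u" using trans_ex by blast
    have "v \<in> R `` {g x}" using p g by simp
    also have "\<dots> = g ` (R `` {x})" using class_img[OF R g(1)] .
    also have "\<dots> = S `` {g x}" using class_img[OF S g(1)] e by simp
    finally show "p \<in> S" using p g by simp
  qed
  thus ?thesis using assms by blast
qed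

end


context lpg
begin

lemma T_elem: "\<Delta> \<in> Tset G \<Longrightarrow> \<exists>a b c. a \<noteq> b \<and> \<Delta> = Vcong G a b `` {c}"
  unfolding Tset_def by blast

lemma wpair_prop: assumes "\<Delta> \<in> Tset G"
  shows "fst (wpair G \<Delta>) \<noteq> snd (wpair G \<Delta>) \<and> \<Delta> \<in> UNIV // Vcong G (fst (wpair G \<Delta>)) (snd (wpair G \<Delta>))"
proof -
  obtain a b c where "a \<noteq> b" "\<Delta> = Vcong G a b `` {c}" using T_elem[OF assms] by blast
  hence "\<exists>p. fst p \<noteq> snd p \<and> \<Delta> \<in> UNIV // Vcong G (fst p) (snd p)"
    by (intro exI[of _ "(a,b)"]) (auto intro: quotientI)
  thus ?thesis unfolding wpair_def by (rule someI_ex)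
qed

lemma kappa_cc: "convex_congruence G (kappa G \<Delta>)"
  unfolding kappa_def by (rule Vcong_cc)

lemma kappa_class: assumes "\<Delta> \<in> Tset G" "x \<in> \<Delta>" shows "kappa G \<Delta> `` {x} = \<Delta>"
proof -
  have q: "\<Delta> \<in> UNIV // kappa G \<Delta>" using wpair_prop[OF assms(1)] unfolding kappa_def by blast
  then obtain c where c: "\<Delta> = kappa G \<Delta> `` {c}" by (auto elim: quotientE)
  hence "(c,x) \<in> kappa G \<Delta>" using assms(2) by blast
  thus ?thesis using c equiv_class_eq[OF cc_equiv[OF kappa_cc]] by metis
qed

lemma kappa_pair: assumes "\<Delta> \<in> Tset G"
  shows "\<exists>a b. a \<noteq> b \<and> (a,b) \<in> kappa G \<Delta>"
  using wpair_prop[OF assms] Vcong_mem unfolding kappa_def by blast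

lemma T_nonempty: assumes "\<Delta> \<in> Tset G" shows "\<exists>x. x \<in> \<Delta>"
  using T_elem[OF assms] cc_refl[OF Vcong_cc] by blast

lemma T_of: "a \<noteq> b \<Longrightarrow> Vcong G a b `` {c} \<in> Tset G"
  unfolding Tset_def by blast

lemma Qset_moves: assumes "\<Delta> \<in> Tset G" "h \<in> Qset G \<Delta>"
  shows "\<exists>\<gamma>\<in>\<Delta>. h \<gamma> \<noteq> \<gamma>" "\<And>x. x \<notin> \<Delta> \<Longrightarrow> h x = x" "h \<in> G"
proof -
  obtain \<gamma> where g: "\<gamma> \<in> \<Delta>" "Vcong G \<gamma> (h \<gamma>) = kappa G \<Delta>"
    using assms(2) unfolding Qset_def by blast
  obtain a b where ab: "a \<noteq> b" "(a,b) \<in> kappa G \<Delta>" using kappa_pair[OF assms(1)] by blast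
  have "h \<gamma> \<noteq> \<gamma>"
  proof
    assume "h \<gamma> = \<gamma>"
    hence "(a,b) \<in> Vcong G \<gamma> \<gamma>" using g ab by simp
    thus False using Vcong_same ab by blast
  qed
  thus "\<exists>\<gamma>\<in>\<Delta>. h \<gamma> \<noteq> \<gamma>" using g by blast
  show "\<And>x. x \<notin> \<Delta> \<Longrightarrow> h x = x" using assms(2) unfolding Qset_def rstab_def by blast
  show "h \<in> G" using assms(2) unfolding Qset_def rstab_def by blast
qed

lemma piset_min:
  assumes T: "\<Delta> \<in> Tset G" and mn: "\<forall>\<Delta>'\<in>Tset G. \<not> \<Delta>' \<subset> \<Delta>"
  shows "piset G \<Delta> = {{x} | x. x \<in> \<Delta>}"
proof -
  define p1 where "p1 = fst (wpair G \<Delta>)"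
  define p2 where "p2 = snd (wpair G \<Delta>)"
  define V where "V = Vcong G p1 p2"
  define U where "U = Ucong G p1 p2"
  have p12: "p1 \<noteq> p2" using wpair_prop[OF T] p1_def p2_def by simp
  have VK: "V = kappa G \<Delta>" unfolding V_def kappa_def p1_def p2_def ..
  have IdU: "Id \<subseteq> U" unfolding U_def Ucong_def using cc_Id p12 by blast
  have U1: "U `` {x} = {x}" if x: "x \<in> \<Delta>" for x
  proof -
    have "y = x" if y: "(x,y) \<in> U" for y
    proof (rule ccontr)
      assume yx: "y \<noteq> x"
      obtain R where R: "convex_congruence G R" "(p1,p2) \<notin> R" "(x,y) \<in> R"
        using y unfolding U_def Ucong_def by blast
      have "\<not> V \<subseteq> R" using R(2) Vcong_mem V_def by blast
      hence RV: "R \<subseteq> V" using chain[OF R(1) Vcong_cc[of p1 p2]] V_def by blast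
      define W where "W = Vcong G x y"
      have WR: "W \<subseteq> R" unfolding W_def by (rule Vcong_least[OF R(1) R(3)])
      have "W `` {x} \<in> Tset G" unfolding W_def using T_of yx by metis
      moreover have "W `` {x} \<subseteq> \<Delta>" using WR RV kappa_class[OF T x] VK by blast
      ultimately have "W `` {x} = V `` {x}" using mn kappa_class[OF T x] VK by blast
      hence "W = V" using same_class_eq Vcong_cc W_def V_def by metis
      hence "(p1,p2) \<in> R" using WR V_def Vcong_mem by blast
      thus False using R(2) by blast
    qed
    thus ?thesis using IdU by blast
  qed
  show ?thesis
  proof (rule set_eqI)
    fix C
    show "C \<in> piset G \<Delta> \<longleftrightarrow> C \<in> {{x} | x. x \<in> \<Delta>}"
    proof
      assume "C \<in> piset G \<Delta>"
      hence C: "C \<in> UNIV // U" "C \<subseteq> \<Delta>" unfolding piset_def U_def p1_def p2_def by auto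
      then obtain y where y: "C = U `` {y}" by (auto elim: quotientE)
      hence "y \<in> \<Delta>" using IdU C(2) by blast
      thus "C \<in> {{x} | x. x \<in> \<Delta>}" using y U1 by blast
    next
      assume "C \<in> {{x} | x. x \<in> \<Delta>}"
      then obtain x where x: "C = {x}" "x \<in> \<Delta>" by blast
      hence "C = U `` {x}" using U1 by simp
      hence "C \<in> UNIV // U" by (auto intro: quotientI)
      thus "C \<in> piset G \<Delta>" using x unfolding piset_def U_def p1_def p2_def by auto
    qed
  qed
qed

lemma supp_img: assumes "a \<in> G" "\<And>x. x \<notin> \<Delta> \<Longrightarrow> a x = x" "y \<in> \<Delta>" shows "a y \<in> \<Delta>"
proof (rule ccontr)
  assume "a y \<notin> \<Delta>"
  hence "a (a y) = a y" using assms(2) by blast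
  hence "a y = y" using eq_iff[OF assms(1)] by blast
  thus False using \<open>a y \<notin> \<Delta>\<close> assms(3) by simp
qed

lemma supp_stab: assumes "a \<in> G" "\<And>x. x \<notin> \<Delta> \<Longrightarrow> a x = x" shows "a ` \<Delta> = \<Delta>"
proof
  show "a ` \<Delta> \<subseteq> \<Delta>" using supp_img[OF assms] by blast
  show "\<Delta> \<subseteq> a ` \<Delta>"
  proof
    fix y assume y: "y \<in> \<Delta>"
    have "inv a x = x" if "x \<notin> \<Delta>" for x using assms(2)[OF that] inv1[OF assms(1), of x] by simp
    hence "inv a y \<in> \<Delta>" using supp_img[OF invG[OF assms(1)]] y by blast
    thus "y \<in> a ` \<Delta>" using inv2[OF assms(1)] by (metis image_eqI)
  qed
qed

lemma forward:
  assumes amp: "ample G" and T: "\<Delta> \<in> Tset G" and mn: "\<forall>\<Delta>'\<in>Tset G. \<not> \<Delta>' \<subset> \<Delta>"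
    and ty: "type_I (piset G \<Delta>) set_less (induced_grp G \<Delta>)"
  shows "\<exists>h1\<in>G. pw_le id h1 \<and> h1 \<noteq> id \<and>
            (\<forall>a\<in>G. \<forall>b\<in>G. pw_le (pw_join (pw_abs a) (pw_abs b)) h1 \<longrightarrow> a \<circ> b = b \<circ> a)"
proof -
  let ?P = "piset G \<Delta>"
  have P: "?P = {{x} | x. x \<in> \<Delta>}" by (rule piset_min[OF T mn])
  obtain h where h: "h \<in> Qset G \<Delta>" using amp T unfolding ample_def by blast
  note hm = Qset_moves[OF T h]
  obtain \<gamma> where g: "\<gamma> \<in> \<Delta>" "h \<gamma> \<noteq> \<gamma>" using hm(1) by blast
  define h1 where "h1 = (\<lambda>x. max (h x) (inv h x))"
  have hG: "h \<in> G" by (rule hm(3))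
  have h1G: "h1 \<in> G" unfolding h1_def using hG by simp
  have ge: "x \<le> h1 x" for x
  proof (cases "h x \<le> x")
    case True
    hence "x \<le> inv h x" using le_inv[OF hG] by simp
    thus ?thesis unfolding h1_def by (simp add: le_max_iff_disj)
  next
    case False thus ?thesis unfolding h1_def by (meson le_max_iff_disj le_cases)
  qed
  have fix1: "h1 x = x" if "x \<notin> \<Delta>" for x
  proof -
    have "h x = x" using hm(2) that by blast
    hence "inv h x = x" using inv1[OF hG, of x] by simp
    thus ?thesis unfolding h1_def using \<open>h x = x\<close> by simp
  qed
  have "h1 \<gamma> \<noteq> \<gamma>"
  proof
    assume e: "h1 \<gamma> = \<gamma>"
    hence "h \<gamma> \<le> \<gamma>" "inv h \<gamma> \<le> \<gamma>" unfolding h1_def by (metis max.cobounded1, metis max.cobounded2)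
    hence "\<gamma> \<le> h \<gamma>" using inv_le[OF hG] by simp
    thus False using \<open>h \<gamma> \<le> \<gamma>\<close> g(2) by simp
  qed
  hence h1n: "h1 \<noteq> id" by auto
  have comm: "a \<circ> b = b \<circ> a" if a: "a \<in> G" and b: "b \<in> G"
    and le: "pw_le (pw_join (pw_abs a) (pw_abs b)) h1" for a b
  proof -
    have fixs: "c x = x" if c: "c \<in> G" "\<forall>x. c x \<le> h1 x \<and> inv c x \<le> h1 x" and x: "x \<notin> \<Delta>" for c x
    proof -
      have "c x \<le> x" "inv c x \<le> x" using c(2) fix1[OF x] by metis+
      hence "x \<le> c x" using inv_le[OF c(1)] by simp
      thus ?thesis using \<open>c x \<le> x\<close> by simp
    qed
    have la: "\<forall>x. a x \<le> h1 x \<and> inv a x \<le> h1 x" and lb: "\<forall>x. b x \<le> h1 x \<and> inv b x \<le> h1 x"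
      using le unfolding pw_le_def pw_join_def pw_abs_def by (simp_all add: max.bounded_iff)
    have fa: "\<And>x. x \<notin> \<Delta> \<Longrightarrow> a x = x" using fixs[OF a la] by blast
    have fb: "\<And>x. x \<notin> \<Delta> \<Longrightarrow> b x = x" using fixs[OF b lb] by blast
    obtain A :: "real set" and \<phi> :: "'a set \<Rightarrow> real" where tI: "bij_betw \<phi> ?P A"
       "\<forall>f\<in>induced_grp G \<Delta>. \<exists>a\<in>A. \<forall>C\<in>?P. f C \<in> ?P \<and> \<phi> (f C) = \<phi> C + a"
      using ty unfolding type_I_def by (elim exE conjE) blast
    have ind: "restrict (\<lambda>C. c ` C) ?P \<in> induced_grp G \<Delta>" if "c \<in> G" "\<And>x. x \<notin> \<Delta> \<Longrightarrow> c x = x" for c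
      using that supp_stab[OF that] unfolding induced_grp_def stab_def by blast
    have tr: "\<exists>s. \<forall>x\<in>\<Delta>. \<phi> {c x} = \<phi> {x} + s" if cc: "c \<in> G" "\<And>x. x \<notin> \<Delta> \<Longrightarrow> c x = x" for c
    proof -
      obtain s where s: "\<forall>C\<in>?P. \<phi> (restrict (\<lambda>C. c ` C) ?P C) = \<phi> C + s"
        using tI(2) ind[OF cc] by blast
      have "\<phi> {c x} = \<phi> {x} + s" if x: "x \<in> \<Delta>" for x
      proof -
        have "{x} \<in> ?P" using P x by blast
        thus ?thesis using s by auto
      qed
      thus ?thesis by blast
    qed
    obtain sa where sa: "\<forall>x\<in>\<Delta>. \<phi> {a x} = \<phi> {x} + sa" using tr[OF a fa] by blast
    obtain sb where sb: "\<forall>x\<in>\<Delta>. \<phi> {b x} = \<phi> {x} + sb" using tr[OF b fb] by blast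
    have inj: "inj_on \<phi> ?P" using tI(1) bij_betw_def by blast
    show ?thesis
    proof
      fix x show "(a \<circ> b) x = (b \<circ> a) x"
      proof (cases "x \<in> \<Delta>")
        case False thus ?thesis using fa fb by simp
      next
        case True
        have ax: "a x \<in> \<Delta>" and bx: "b x \<in> \<Delta>" using supp_img[OF a fa] supp_img[OF b fb] True by auto
        have abx: "a (b x) \<in> \<Delta>" and bax: "b (a x) \<in> \<Delta>" using supp_img[OF a fa] supp_img[OF b fb] ax bx by auto
        have "\<phi> {a (b x)} = \<phi> {b (a x)}" using sa sb True ax bx by simp
        hence "{a (b x)} = {b (a x)}" using inj abx bax P unfolding inj_on_def by blast
        thus ?thesis by simp
      qed
    qed
  qed
  show ?thesis using h1G ge h1n comm unfolding pw_le_def by (intro bexI[of _ h1]) auto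
qed

end


lemma funpow_comm: "f \<circ> g = g \<circ> f \<Longrightarrow> f \<circ> (g ^^ n) = (g ^^ n) \<circ> f"
proof -
  assume c: "f \<circ> g = g \<circ> f"
  have "f ((g ^^ n) x) = (g ^^ n) (f x)" for x
  proof (induct n)
    case 0 thus ?case by simp
  next
    case (Suc n)
    have "f ((g ^^ Suc n) x) = g (f ((g ^^ n) x))" using fun_cong[OF c] by simp
    thus ?case using Suc by simp
  qed
  thus ?thesis by (simp add: fun_eq_iff)
qed

lemma funpow_comp_comm: "f \<circ> g = g \<circ> f \<Longrightarrow> (f \<circ> g) ^^ n = f ^^ n \<circ> g ^^ n"
proof -
  assume c0: "f \<circ> g = g \<circ> f"
  have c: "g ((f ^^ n) x) = (f ^^ n) (g x)" for n x
    using fun_cong[OF funpow_comm[of g f n, OF c0[symmetric]], of x] by simp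
  have "((f \<circ> g) ^^ n) x = (f ^^ n) ((g ^^ n) x)" for x
  proof (induct n)
    case 0 thus ?case by simp
  next
    case (Suc n)
    have "((f \<circ> g) ^^ Suc n) x = f (g (((f \<circ> g) ^^ n) x))" by simp
    also have "\<dots> = f (g ((f ^^ n) ((g ^^ n) x)))" by (simp only: Suc)
    also have "\<dots> = f ((f ^^ n) (g ((g ^^ n) x)))" using c by simp
    also have "\<dots> = (f ^^ Suc n) ((g ^^ Suc n) x)" by simp
    finally show ?case .
  qed
  thus ?thesis by (simp add: fun_eq_iff)
qed

context lpg begin

definition Hull :: "('a \<Rightarrow> 'a) \<Rightarrow> 'a \<Rightarrow> 'a set" where
  "Hull f z = {y. \<exists>n m. (inv f ^^ n) z \<le> y \<and> y \<le> (f ^^ m) z}"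

lemma pw_le_pow: "f \<in> G \<Longrightarrow> ((f ^^ n) x \<le> (f ^^ n) y) = (x \<le> y)"
  using le_iff[OF powG] by blast

lemma pow_inv1: "f \<in> G \<Longrightarrow> (inv f ^^ n) ((f ^^ n) z) = z"
proof (induct n arbitrary: z)
  case 0 thus ?case by simp
next
  case (Suc n)
  have a: "(f ^^ Suc n) z = f ((f ^^ n) z)" by simp
  have b: "(inv f ^^ Suc n) y = (inv f ^^ n) (inv f y)" for y by (simp only: funpow_Suc_right comp_apply)
  show ?case unfolding a b using Suc by simp
qed

lemma pow_inv2: "f \<in> G \<Longrightarrow> (f ^^ n) ((inv f ^^ n) z) = z"
  using pow_inv1[of "inv f" n z] by simp

lemma pow_add_app: "(f ^^ m) ((f ^^ n) z) = (f ^^ (m + n)) z"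
  by (simp add: funpow_add)

lemma Hull_self: "z \<in> Hull f z"
  unfolding Hull_def by (rule CollectI, rule exI[of _ 0], rule exI[of _ 0]) simp

lemma Hull_conv: "x \<in> Hull f z \<Longrightarrow> y \<in> Hull f z \<Longrightarrow> x \<le> w \<Longrightarrow> w \<le> y \<Longrightarrow> w \<in> Hull f z"
  unfolding Hull_def by (auto intro: order_trans)

lemma Hull_same: assumes f: "f \<in> G" and y: "y \<in> Hull f z" shows "Hull f y = Hull f z"
proof -
  obtain n m where n: "(inv f ^^ n) z \<le> y" "y \<le> (f ^^ m) z" using y unfolding Hull_def by blast
  have fi: "inv f \<in> G" using f by simp
  have zy: "z \<le> (f ^^ n) y" using pw_le_pow[OF f, of n "(inv f ^^ n) z" y] n(1) pow_inv2[OF f] by simp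
  have yz: "(inv f ^^ m) y \<le> z" using pw_le_pow[OF fi, of m y "(f ^^ m) z"] n(2) pow_inv1[OF f] by simp
  show ?thesis
  proof
    show "Hull f y \<subseteq> Hull f z"
    proof
      fix w assume "w \<in> Hull f y"
      then obtain n' m' where m: "(inv f ^^ n') y \<le> w" "w \<le> (f ^^ m') y" unfolding Hull_def by blast
      have "(inv f ^^ (n'+n)) z \<le> (inv f ^^ n') y"
        using pw_le_pow[OF fi, of n' "(inv f ^^ n) z" y] n(1) pow_add_app[where f="inv f" and m=n' and n=n and z=z] by simp
      moreover have "(f ^^ m') y \<le> (f ^^ (m'+m)) z"
        using pw_le_pow[OF f, of m' y "(f ^^ m) z"] n(2) pow_add_app[where f=f and m=m' and n=m and z=z] by simp
      ultimately have "(inv f ^^ (n'+n)) z \<le> w \<and> w \<le> (f ^^ (m'+m)) z" using m order_trans by blast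
      thus "w \<in> Hull f z" unfolding Hull_def by blast
    qed
  next
    show "Hull f z \<subseteq> Hull f y"
    proof
      fix w assume "w \<in> Hull f z"
      then obtain n' m' where m: "(inv f ^^ n') z \<le> w" "w \<le> (f ^^ m') z" unfolding Hull_def by blast
      have "(inv f ^^ (n'+m)) y \<le> (inv f ^^ n') z"
        using pw_le_pow[OF fi, of n' "(inv f ^^ m) y" z] yz pow_add_app[where f="inv f" and m=n' and n=m and z=y] by simp
      moreover have "(f ^^ m') z \<le> (f ^^ (m'+n)) y"
        using pw_le_pow[OF f, of m' z "(f ^^ n) y"] zy pow_add_app[where f=f and m=m' and n=n and z=y] by simp
      ultimately have "(inv f ^^ (n'+m)) y \<le> w \<and> w \<le> (f ^^ (m'+n)) y" using m order_trans by blast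
      thus "w \<in> Hull f y" unfolding Hull_def by blast
    qed
  qed
qed

lemma comm_inv: assumes "e \<in> G" "f \<in> G" "e \<circ> f = f \<circ> e" shows "e \<circ> inv f = inv f \<circ> e"
proof
  fix x
  have "f (e (inv f x)) = e (f (inv f x))" using fun_cong[OF assms(3), of "inv f x"] by simp
  also have "\<dots> = e x" using assms(2) by simp
  finally have "f (e (inv f x)) = e x" .
  hence "inv f (f (e (inv f x))) = inv f (e x)" by simp
  thus "(e \<circ> inv f) x = (inv f \<circ> e) x" using assms by simp
qed

lemma Hull_comm_mem: assumes e: "e \<in> G" and f: "f \<in> G" and c: "e \<circ> f = f \<circ> e" and x: "x \<in> Hull f z"
  shows "e x \<in> Hull f (e z)"
proof -
  obtain n m where n: "(inv f ^^ n) z \<le> x" "x \<le> (f ^^ m) z" using x unfolding Hull_def by blast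
  have c1: "e ((f ^^ m) z) = (f ^^ m) (e z)" using fun_cong[OF funpow_comm[OF c, of m]] by simp
  have c2: "e ((inv f ^^ n) z) = (inv f ^^ n) (e z)"
    using fun_cong[OF funpow_comm[OF comm_inv[OF e f c], of n]] by simp
  have "(inv f ^^ n) (e z) \<le> e x" using n(1) le_iff[OF e] c2 by metis
  moreover have "e x \<le> (f ^^ m) (e z)" using n(2) le_iff[OF e] c1 by metis
  ultimately show ?thesis unfolding Hull_def by blast
qed

lemma Hull_comm: assumes e: "e \<in> G" and f: "f \<in> G" and c: "e \<circ> f = f \<circ> e"
  shows "e ` Hull f z = Hull f (e z)"
proof
  show "e ` Hull f z \<subseteq> Hull f (e z)" using Hull_comm_mem[OF e f c] by blast
  show "Hull f (e z) \<subseteq> e ` Hull f z"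
  proof
    fix y assume y: "y \<in> Hull f (e z)"
    have ci: "inv e \<circ> f = f \<circ> inv e"
    proof -
      have "f \<circ> inv e = inv e \<circ> f" using comm_inv[OF f e] c by simp
      thus ?thesis by simp
    qed
    have "inv e y \<in> Hull f (inv e (e z))" using Hull_comm_mem[OF invG[OF e] f ci y] .
    hence "inv e y \<in> Hull f z" using e by simp
    thus "y \<in> e ` Hull f z" using img_conv[OF e] by simp
  qed
qed

lemma Hull_in_class: assumes f: "f \<in> G" and R: "convex_congruence G R" and z: "(z, f z) \<in> R"
  shows "Hull f z \<subseteq> R `` {z}"
proof
  have p: "(z, (f ^^ n) z) \<in> R" for n
  proof (induct n)
    case 0 thus ?case using cc_refl[OF R] by simp
  next
    case (Suc n)
    have "(f z, f ((f ^^ n) z)) \<in> R" using cc_inv[OF R f Suc] .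
    thus ?case using cc_trans[OF R z] by simp
  qed
  have z': "(z, inv f z) \<in> R" using cc_inv[OF R invG[OF f] z] f cc_sym[OF R] by simp
  have m: "(z, (inv f ^^ n) z) \<in> R" for n
  proof (induct n)
    case 0 thus ?case using cc_refl[OF R] by simp
  next
    case (Suc n)
    have "(inv f z, inv f ((inv f ^^ n) z)) \<in> R" using cc_inv[OF R invG[OF f] Suc] .
    thus ?case using cc_trans[OF R z'] by simp
  qed
  fix y assume "y \<in> Hull f z"
  then obtain n k where n: "(inv f ^^ n) z \<le> y" "y \<le> (f ^^ k) z" unfolding Hull_def by blast
  have "((inv f ^^ n) z, (f ^^ k) z) \<in> R" using cc_trans[OF R cc_sym[OF R m] p] .
  hence "((inv f ^^ n) z, y) \<in> R" using cc_conv0[OF R _ n(1) n(2)] by blast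
  hence "(z, y) \<in> R" using cc_trans[OF R m] by blast
  thus "y \<in> R `` {z}" by simp
qed

definition Rel :: "'a set \<Rightarrow> ('a \<times> 'a) set" where
  "Rel J0 = {(y,w). \<exists>g\<in>G. y \<in> g ` J0 \<and> w \<in> g ` J0}"

lemma part_cc:
  assumes conv: "\<And>x y w. x \<in> J0 \<Longrightarrow> y \<in> J0 \<Longrightarrow> x \<le> w \<Longrightarrow> w \<le> y \<Longrightarrow> w \<in> J0"
    and a: "a \<in> J0" and part: "\<And>k u. k \<in> G \<Longrightarrow> u \<in> J0 \<Longrightarrow> k u \<in> J0 \<Longrightarrow> k ` J0 = J0"
  shows "convex_congruence G (Rel J0)" "Rel J0 `` {a} \<subseteq> J0"
proof -
  have same: "g' ` J0 = g ` J0" if g: "g \<in> G" "g' \<in> G" and w: "w \<in> g ` J0" "w \<in> g' ` J0" for g g' w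
  proof -
    obtain u' where u': "u' \<in> J0" "w = g' u'" using w(2) by blast
    define k where "k = inv g \<circ> g'"
    have kG: "k \<in> G" unfolding k_def using g by simp
    have "k u' \<in> J0" unfolding k_def using u' w(1) img_conv[OF g(1)] by simp
    hence kJ: "k ` J0 = J0" using part[OF kG u'(1)] by blast
    have "g' = g \<circ> k" unfolding k_def using g by (auto simp: fun_eq_iff)
    hence "g' ` J0 = g ` (k ` J0)" by (simp add: image_comp)
    thus ?thesis using kJ by simp
  qed
  have eq: "equiv UNIV (Rel J0)"
  proof (rule equivI)
    show "refl (Rel J0)" unfolding refl_on_def Rel_def
    proof (intro conjI ballI)
      fix y :: 'a
      obtain g where "g \<in> G" "g a = y" using trans_ex by blast
      thus "(y,y) \<in> {(y, w). \<exists>g\<in>G. y \<in> g ` J0 \<and> w \<in> g ` J0}" using a by blast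
    qed
    show "Rel J0 \<subseteq> UNIV \<times> UNIV" by simp
    show "sym (Rel J0)" unfolding sym_def Rel_def by blast
    show "trans (Rel J0)" unfolding trans_def Rel_def
    proof (intro allI impI)
      fix x y z assume "(x, y) \<in> {(y, w). \<exists>g\<in>G. y \<in> g ` J0 \<and> w \<in> g ` J0}"
        "(y, z) \<in> {(y, w). \<exists>g\<in>G. y \<in> g ` J0 \<and> w \<in> g ` J0}"
      then obtain g g' where "g \<in> G" "g' \<in> G" "x \<in> g ` J0" "y \<in> g ` J0" "y \<in> g' ` J0" "z \<in> g' ` J0"
        by blast
      thus "(x, z) \<in> {(y, w). \<exists>g\<in>G. y \<in> g ` J0 \<and> w \<in> g ` J0}" using same by blast
    qed
  qed
  have inv: "\<forall>g\<in>G. \<forall>x y. (x, y) \<in> Rel J0 \<longrightarrow> (g x, g y) \<in> Rel J0"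
  proof (intro ballI allI impI)
    fix g x y assume g: "g \<in> G" and "(x,y) \<in> Rel J0"
    then obtain k where k: "k \<in> G" "x \<in> k ` J0" "y \<in> k ` J0" unfolding Rel_def by blast
    have "g x \<in> (g \<circ> k) ` J0" "g y \<in> (g \<circ> k) ` J0" using k by (auto simp: image_comp[symmetric])
    thus "(g x, g y) \<in> Rel J0" unfolding Rel_def using g k(1) compG by blast
  qed
  have cv: "\<forall>x y z. (x, y) \<in> Rel J0 \<and> x \<le> z \<and> z \<le> y \<longrightarrow> (x, z) \<in> Rel J0"
  proof (intro allI impI)
    fix x y z assume h: "(x, y) \<in> Rel J0 \<and> x \<le> z \<and> z \<le> y"
    then obtain k where k: "k \<in> G" "x \<in> k ` J0" "y \<in> k ` J0" unfolding Rel_def by blast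
    have "inv k x \<in> J0" "inv k y \<in> J0" using k img_conv by auto
    moreover have "inv k x \<le> inv k z" "inv k z \<le> inv k y" using h le_iff[OF invG[OF k(1)]] by auto
    ultimately have "inv k z \<in> J0" using conv by blast
    hence "z \<in> k ` J0" using img_conv[OF k(1)] by simp
    thus "(x,z) \<in> Rel J0" unfolding Rel_def using k by blast
  qed
  show "convex_congruence G (Rel J0)" unfolding convex_congruence_def using eq inv cv by blast
  show "Rel J0 `` {a} \<subseteq> J0"
  proof
    fix y assume "y \<in> Rel J0 `` {a}"
    then obtain k where k: "k \<in> G" "a \<in> k ` J0" "y \<in> k ` J0" unfolding Rel_def by blast
    have "id ` J0 = k ` J0" using same[OF idG k(1), of a] k(2) a by simp
    thus "y \<in> J0" using k(3) by simp
  qed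
qed

end

locale bk = lpg +
  fixes h1 :: "'a \<Rightarrow> 'a" and \<alpha> :: 'a
  assumes h1G: "h1 \<in> G" and h1ge: "\<And>x. x \<le> h1 x" and h1a: "h1 \<alpha> \<noteq> \<alpha>"
    and commh: "\<forall>a\<in>G. \<forall>b\<in>G. pw_le (pw_join (pw_abs a) (pw_abs b)) h1 \<longrightarrow> a \<circ> b = b \<circ> a"
    and amp: "ample G"
begin

definition small :: "('a \<Rightarrow> 'a) \<Rightarrow> bool" where
  "small a \<longleftrightarrow> a \<in> G \<and> (\<forall>x. a x \<le> h1 x \<and> inv a x \<le> h1 x)"

lemma small_comm: "small a \<Longrightarrow> small b \<Longrightarrow> a \<circ> b = b \<circ> a"
  using commh unfolding small_def pw_le_def pw_join_def pw_abs_def by (simp add: max.bounded_iff)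

lemma small_G: "small a \<Longrightarrow> a \<in> G" unfolding small_def by blast

lemma h1i: "inv h1 x \<le> x" using inv_le[OF h1G] h1ge by simp

lemma small_h1: "small h1" unfolding small_def using h1G h1ge h1i order_trans by blast

lemma small_inv: "small a \<Longrightarrow> small (inv a)" unfolding small_def by auto

lemma small_low: "small a \<Longrightarrow> inv h1 x \<le> a x"
proof -
  assume s: "small a"
  hence "inv a (a x) \<le> h1 (a x)" unfolding small_def by blast
  hence "x \<le> h1 (a x)" using s small_G by simp
  thus ?thesis using inv_le[OF h1G] by simp
qed

definition clamp :: "('a \<Rightarrow> 'a) \<Rightarrow> 'a \<Rightarrow> 'a" where
  "clamp g = (\<lambda>x. max (min (g x) (h1 x)) (inv h1 x))"

lemma clamp_small: assumes g: "g \<in> G" shows "small (clamp g)"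
proof -
  have cG: "clamp g \<in> G" unfolding clamp_def using g h1G by simp
  have up: "clamp g x \<le> h1 x" for x unfolding clamp_def using h1ge[of x] h1i[of x] by simp
  have lo: "inv h1 x \<le> clamp g x" for x unfolding clamp_def by simp
  have "inv (clamp g) x \<le> h1 x" for x
  proof -
    have "x \<le> clamp g (h1 x)" using lo[of "h1 x"] h1G by simp
    thus ?thesis using inv_le[OF cG] by simp
  qed
  thus ?thesis unfolding small_def using cG up by blast
qed

lemma clamp_val: "inv h1 z \<le> w \<Longrightarrow> w \<le> h1 z \<Longrightarrow> g z = w \<Longrightarrow> clamp g z = w"
  unfolding clamp_def by simp

inductive_set E :: "('a \<Rightarrow> 'a) set" where
  E_id: "id \<in> E"
| E_step: "small b \<Longrightarrow> e \<in> E \<Longrightarrow> b \<circ> e \<in> E"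

lemma E_G: "e \<in> E \<Longrightarrow> e \<in> G"
  by (induct rule: E.induct) (auto dest: small_G)

lemma E_comm_small: "e \<in> E \<Longrightarrow> small p \<Longrightarrow> p \<circ> e = e \<circ> p"
proof (induct rule: E.induct)
  case E_id thus ?case by simp
next
  case (E_step b e)
  have pb: "p (b x) = b (p x)" for x using fun_cong[OF small_comm[OF E_step(4) E_step(1)], of x] by simp
  have pe: "p (e x) = e (p x)" for x using fun_cong[OF E_step(3)[OF E_step(4)], of x] by simp
  show ?case by (simp add: fun_eq_iff pb pe)
qed

lemma E_comm: "e \<in> E \<Longrightarrow> e' \<in> E \<Longrightarrow> e \<circ> e' = e' \<circ> e"
proof (induct rule: E.induct)
  case E_id thus ?case by simp
next
  case (E_step b e)
  have pb: "e' (b x) = b (e' x)" for x using fun_cong[OF E_comm_small[OF E_step(4) E_step(1)], of x] by simp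
  have pe: "e (e' x) = e' (e x)" for x using fun_cong[OF E_step(3)[OF E_step(4)], of x] by simp
  show ?case by (simp add: fun_eq_iff pb pe)
qed

lemma E_comp: "e \<in> E \<Longrightarrow> e' \<in> E \<Longrightarrow> e \<circ> e' \<in> E"
  by (induct rule: E.induct) (auto simp: comp_assoc intro: E_step)

lemma E_small: "small b \<Longrightarrow> b \<in> E"
  using E_step[OF _ E_id] by fastforce

lemma E_id': "(\<lambda>x. x) \<in> E" using E_id by (simp add: id_def)

lemma E_pow: "e \<in> E \<Longrightarrow> e ^^ n \<in> E"
  by (induct n) (auto intro: E_id E_id' E_comp)

lemma E_inv: "e \<in> E \<Longrightarrow> inv e \<in> E"
proof (induct rule: E.induct)
  case E_id thus ?case by (simp add: E_id')
next
  case (E_step b e)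
  have "inv (b \<circ> e) = inv e \<circ> inv b"
    using o_inv_distrib[OF bijG[OF small_G[OF E_step(1)]] bijG[OF E_G[OF E_step(2)]]] by simp
  thus ?case using E_comp[OF E_step(3) E_small[OF small_inv[OF E_step(1)]]] by (simp only:)
qed

lemma h1E: "h1 ^^ n \<in> E" using E_pow[OF E_small[OF small_h1]] .
lemma h1iE: "inv h1 ^^ n \<in> E" using E_pow[OF E_small[OF small_inv[OF small_h1]]] .

lemma orbit: "(inv h1 ^^ n) z \<le> y \<Longrightarrow> y \<le> (h1 ^^ n) z \<Longrightarrow> \<exists>e\<in>E. e z = y"
proof (induct n arbitrary: y)
  case 0
  hence "y = z" by simp
  thus ?case using E_id by (intro bexI[of _ id]) auto
next
  case (Suc n)
  show ?case
  proof (cases "(inv h1 ^^ n) z \<le> y \<and> y \<le> (h1 ^^ n) z")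
    case True thus ?thesis using Suc by blast
  next
    case False
    show ?thesis
    proof (cases "y \<le> (h1 ^^ n) z")
      case False
      define w where "w = (h1 ^^ n) z"
      have "y \<le> h1 w" using Suc(3) w_def by simp
      moreover have "inv h1 w \<le> y" using False h1i[of w] w_def by simp
      moreover obtain g where g: "g \<in> G" "g w = y" using trans_ex by blast
      ultimately have "clamp g w = y" using clamp_val by blast
      hence "(clamp g \<circ> h1 ^^ n) z = y" using w_def by simp
      thus ?thesis using E_step[OF clamp_small[OF g(1)] h1E] by blast
    next
      case True
      hence lo: "y < (inv h1 ^^ n) z" using False by auto
      define w where "w = (inv h1 ^^ n) z"
      have "inv h1 w \<le> y" using Suc(2) w_def by simp
      moreover have "y \<le> h1 w" using lo h1ge[of w] w_def by simp
      moreover obtain g where g: "g \<in> G" "g w = y" using trans_ex by blast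
      ultimately have "clamp g w = y" using clamp_val by blast
      hence "(clamp g \<circ> inv h1 ^^ n) z = y" using w_def by simp
      thus ?thesis using E_step[OF clamp_small[OF g(1)] h1iE] by blast
    qed
  qed
qed

lemma h1_pow_mono: "(h1 ^^ n) z \<le> (h1 ^^ (k + n)) z"
proof (induct k)
  case 0 thus ?case by simp
next
  case (Suc k) thus ?case using h1ge[of "(h1 ^^ (k + n)) z"] by simp
qed

lemma h1i_pow_mono: "(inv h1 ^^ (k + n)) z \<le> (inv h1 ^^ n) z"
proof (induct k)
  case 0 thus ?case by simp
next
  case (Suc k) thus ?case using h1i[of "(inv h1 ^^ (k + n)) z"] by simp
qed

lemma orbit_Hull: "y \<in> Hull h1 z \<Longrightarrow> \<exists>e\<in>E. e z = y"
proof -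
  assume "y \<in> Hull h1 z"
  then obtain n m where n: "(inv h1 ^^ n) z \<le> y" "y \<le> (h1 ^^ m) z" unfolding Hull_def by blast
  have "(inv h1 ^^ (m + n)) z \<le> y" using h1i_pow_mono[of m n z] n(1) by simp
  moreover have "y \<le> (h1 ^^ (m + n)) z" using h1_pow_mono[of m z n] n(2) by (simp add: add.commute)
  ultimately show ?thesis using orbit by blast
qed

lemma key: "small p \<Longrightarrow> p z = z \<Longrightarrow> y \<in> Hull h1 z \<Longrightarrow> p y = y"
proof -
  assume s: "small p" and pz: "p z = z" and y: "y \<in> Hull h1 z"
  obtain e where e: "e \<in> E" "e z = y" using orbit_Hull[OF y] by blast
  have "p (e z) = e (p z)" using fun_cong[OF E_comm_small[OF e(1) s], of z] by simp
  thus ?thesis using e pz by simp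
qed

abbreviation J where "J \<equiv> Hull h1 \<alpha>"

lemma h1_fix_pow: "h1 y = y \<Longrightarrow> (h1 ^^ k) y = y"
  by (induct k) auto

lemma J_supp: assumes y: "y \<in> J" shows "y < h1 y"
proof (rule ccontr)
  assume "\<not> y < h1 y"
  hence fy: "h1 y = y" using h1ge[of y] by simp
  obtain n m where n: "(inv h1 ^^ n) \<alpha> \<le> y" "y \<le> (h1 ^^ m) \<alpha>" using y unfolding Hull_def by blast
  have "(h1 ^^ (Suc m + n)) ((inv h1 ^^ n) \<alpha>) \<le> (h1 ^^ (Suc m + n)) y"
    using pw_le_pow[OF h1G] n(1) by blast
  also have "\<dots> = y" using h1_fix_pow[OF fy] .
  finally have a: "(h1 ^^ (Suc m)) \<alpha> \<le> y"
    using pow_add_app[where f=h1 and m="Suc m" and n=n and z="(inv h1 ^^ n) \<alpha>"] pow_inv2[OF h1G] by simp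
  have "\<alpha> < h1 \<alpha>" using h1ge[of \<alpha>] h1a by simp
  hence "(h1 ^^ m) \<alpha> < (h1 ^^ m) (h1 \<alpha>)" using less_iff[OF powG[OF h1G]] by blast
  hence "(h1 ^^ m) \<alpha> < (h1 ^^ Suc m) \<alpha>" by (simp add: funpow_swap1)
  thus False using a n(2) by simp
qed

lemma J_same: "y \<in> J \<Longrightarrow> Hull h1 y = J"
  using Hull_same[OF h1G] .

lemma fix_pos: assumes f: "f \<in> G" and fp: "\<And>x. x \<le> f x" and y: "y \<in> J" "f y = y" and w: "w \<in> J"
  shows "f w = w"
proof -
  define p where "p = (\<lambda>x. min (f x) (h1 x))"
  have pG: "p \<in> G" unfolding p_def using f h1G by simp
  have pge: "x \<le> p x" for x unfolding p_def using fp h1ge by simp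
  have "small p" unfolding small_def
  proof (intro conjI allI pG)
    fix x show "p x \<le> h1 x" unfolding p_def by simp
    have "inv p x \<le> x" using inv_le[OF pG] pge by simp
    thus "inv p x \<le> h1 x" using h1ge order_trans by blast
  qed
  moreover have "p y = y" unfolding p_def using y h1ge[of y] by simp
  moreover have "w \<in> Hull h1 y" using J_same[OF y(1)] w by simp
  ultimately have "p w = w" using key by blast
  thus ?thesis unfolding p_def using J_supp[OF w] fp[of w] by (auto simp: min_def split: if_splits)
qed

lemma fixJ: assumes f: "f \<in> G" and y: "y \<in> J" "f y = y" and w: "w \<in> J" shows "f w = w"
proof -
  have a: "max (f w) w = w"
    using fix_pos[of "\<lambda>x. max (f x) x" y w] f y w by simp
  have b: "max (inv f w) w = w"
    using fix_pos[of "\<lambda>x. max (inv f x) x" y w] f y w inv1[OF f, of y] by simp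
  have "f w \<le> w" using a max.cobounded1[of "f w" w] by simp
  moreover have "inv f w \<le> w" using b max.cobounded1[of "inv f w" w] by simp
  hence "w \<le> f w" using inv_le[OF f] by simp
  ultimately show ?thesis by simp
qed

lemma small_J: "small b \<Longrightarrow> x \<in> J \<Longrightarrow> b x \<in> J"
proof -
  assume b: "small b" and x: "x \<in> J"
  have "(inv h1 ^^ 1) x \<le> b x" "b x \<le> (h1 ^^ 1) x" using small_low[OF b] b unfolding small_def by auto
  hence "b x \<in> Hull h1 x" unfolding Hull_def by (intro CollectI exI conjI) (simp_all only: )
  thus ?thesis using J_same[OF x] by simp
qed

lemma E_J: "e \<in> E \<Longrightarrow> x \<in> J \<Longrightarrow> e x \<in> J"
  by (induct arbitrary: x rule: E.induct) (auto intro: small_J)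

lemma E_Jimg: assumes "e \<in> E" shows "e ` J = J"
proof
  show "e ` J \<subseteq> J" using E_J[OF assms] by blast
  show "J \<subseteq> e ` J"
  proof
    fix y assume "y \<in> J"
    hence "inv e y \<in> J" using E_J[OF E_inv[OF assms]] by blast
    thus "y \<in> e ` J" using img_conv[OF E_G[OF assms]] by simp
  qed
qed

lemma agree: assumes k: "k \<in> G" and e: "e \<in> G" and u: "u \<in> J" "k u = e u" and x: "x \<in> J"
  shows "k x = e x"
proof -
  have "(inv e \<circ> k) u = u" using u e by simp
  hence "(inv e \<circ> k) x = x" using fixJ[of "inv e \<circ> k" u x] k e u x by simp
  hence "e (inv e (k x)) = e x" by simp
  thus ?thesis using e by simp
qed

lemma partJ: assumes k: "k \<in> G" and u: "u \<in> J" "k u \<in> J" shows "k ` J = J"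
proof -
  have sub: "k ` J \<subseteq> J" if k: "k \<in> G" and u: "u \<in> J" "k u \<in> J" for k u
  proof -
    obtain e where e: "e \<in> E" "e u = k u" using orbit_Hull[of "k u" u] u J_same by auto
    have "k x = e x" if "x \<in> J" for x using agree[OF k E_G[OF e(1)] u(1)] e(2) that by simp
    thus ?thesis using E_Jimg[OF e(1)] by auto
  qed
  have "k ` J \<subseteq> J" using sub[OF k u] .
  moreover have "inv k ` J \<subseteq> J" using sub[OF invG[OF k] u(2)] u(1) k by simp
  hence "J \<subseteq> k ` J" using k by (auto simp: img_conv)
  ultimately show ?thesis by blast
qed

end


context bk begin

definition Dl where "Dl = Vcong G \<alpha> (h1 \<alpha>) `` {\<alpha>}"

lemma RelJ: "convex_congruence G (Rel J)" "Rel J `` {\<alpha>} \<subseteq> J"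
proof -
  have conv: "\<And>x y w. x \<in> J \<Longrightarrow> y \<in> J \<Longrightarrow> x \<le> w \<Longrightarrow> w \<le> y \<Longrightarrow> w \<in> J"
    using Hull_conv by blast
  have pt: "\<And>k u. k \<in> G \<Longrightarrow> u \<in> J \<Longrightarrow> k u \<in> J \<Longrightarrow> k ` J = J" using partJ by blast
  show "convex_congruence G (Rel J)" "Rel J `` {\<alpha>} \<subseteq> J" using part_cc[OF conv Hull_self pt] by auto
qed

lemma Dl_J: "Dl = J"
proof
  have "(\<alpha>, h1 \<alpha>) \<in> Rel J"
  proof -
    have "h1 \<alpha> \<in> J" unfolding Hull_def by (intro CollectI exI[of _ 0] exI[of _ 1]) (simp add: h1ge)
    thus ?thesis unfolding Rel_def using Hull_self[of \<alpha> h1] idG by force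
  qed
  hence "Vcong G \<alpha> (h1 \<alpha>) \<subseteq> Rel J" using Vcong_least[OF RelJ(1)] by blast
  thus "Dl \<subseteq> J" unfolding Dl_def using RelJ(2) by blast
  show "J \<subseteq> Dl" unfolding Dl_def using Hull_in_class[OF h1G Vcong_cc Vcong_mem] .
qed

lemma Dl_T: "Dl \<in> Tset G"
  unfolding Dl_def using T_of h1a by metis

lemma Dl_min: "\<forall>\<Delta>'\<in>Tset G. \<not> \<Delta>' \<subset> Dl"
proof (intro ballI notI)
  fix D' assume T: "D' \<in> Tset G" and sub: "D' \<subset> Dl"
  obtain h where h: "h \<in> Qset G D'" using amp T unfolding ample_def by blast
  note hm = Qset_moves[OF T h]
  obtain \<gamma> where g: "\<gamma> \<in> D'" "h \<gamma> \<noteq> \<gamma>" using hm(1) by blast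
  obtain y where y: "y \<in> Dl" "y \<notin> D'" using sub by blast
  have "h y = y" using hm(2) y(2) by blast
  moreover have "\<gamma> \<in> J" using g(1) sub Dl_J by blast
  ultimately have "h \<gamma> = \<gamma>" using fixJ[OF hm(3)] y(1) Dl_J by blast
  thus False using g(2) by blast
qed

lemma arch: assumes d: "d \<in> E" and ad: "\<alpha> < d \<alpha>" shows "\<exists>n. h1 \<alpha> \<le> (d ^^ n) \<alpha>"
proof (rule ccontr)
  assume "\<not> (\<exists>n. h1 \<alpha> \<le> (d ^^ n) \<alpha>)"
  hence lt: "\<And>n. (d ^^ n) \<alpha> < h1 \<alpha>" by (simp add: not_le)
  define Jd where "Jd = Hull d \<alpha>"
  have dG: "d \<in> G" using E_G[OF d] .
  have JdJ: "Jd \<subseteq> J"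
  proof
    fix x assume "x \<in> Jd"
    then obtain n m where n: "(inv d ^^ n) \<alpha> \<le> x" "x \<le> (d ^^ m) \<alpha>" unfolding Jd_def Hull_def by blast
    have "(inv d ^^ n) \<alpha> \<in> J" using E_J[OF E_pow[OF E_inv[OF d]] Hull_self] .
    moreover have "(d ^^ m) \<alpha> \<in> J" using E_J[OF E_pow[OF d] Hull_self] .
    ultimately show "x \<in> J" using Hull_conv n by blast
  qed
  have part: "k ` Jd = Jd" if k: "k \<in> G" and u: "u \<in> Jd" "k u \<in> Jd" for k u
  proof -
    have uJ: "u \<in> J" "k u \<in> J" using u JdJ by blast+
    obtain e where e: "e \<in> E" "e u = k u" using orbit_Hull[of "k u" u] uJ J_same by auto
    have eG: "e \<in> G" using E_G[OF e(1)] .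
    have ag: "k x = e x" if "x \<in> J" for x using agree[OF k eG uJ(1)] e(2) that by simp
    have "e ` Hull d u = Hull d (e u)" using Hull_comm[OF eG dG E_comm[OF e(1) d]] .
    moreover have "Hull d u = Jd" using Hull_same[OF dG] u(1) Jd_def by simp
    moreover have "Hull d (e u) = Jd" using Hull_same[OF dG] u(2) e(2) Jd_def by simp
    ultimately have "e ` Jd = Jd" by simp
    moreover have "k ` Jd = e ` Jd" using ag JdJ by (auto intro!: image_cong)
    ultimately show ?thesis by simp
  qed
  have conv: "\<And>x y w. x \<in> Jd \<Longrightarrow> y \<in> Jd \<Longrightarrow> x \<le> w \<Longrightarrow> w \<le> y \<Longrightarrow> w \<in> Jd"
    using Hull_conv unfolding Jd_def by blast
  have aJd: "\<alpha> \<in> Jd" unfolding Jd_def by (rule Hull_self)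
  have pt: "\<And>k u. k \<in> G \<Longrightarrow> u \<in> Jd \<Longrightarrow> k u \<in> Jd \<Longrightarrow> k ` Jd = Jd" using part by blast
  have R: "convex_congruence G (Rel Jd)" "Rel Jd `` {\<alpha>} \<subseteq> Jd" using part_cc[OF conv aJd pt] by auto
  have daJ: "d \<alpha> \<in> Jd" unfolding Jd_def Hull_def using ad
    by (intro CollectI exI[of _ 0] exI[of _ 1]) simp
  have "(\<alpha>, d \<alpha>) \<in> Rel Jd" unfolding Rel_def using daJ Hull_self[of \<alpha> d] idG Jd_def by force
  hence VR: "Vcong G \<alpha> (d \<alpha>) \<subseteq> Rel Jd" using Vcong_least[OF R(1)] by blast
  define D' where "D' = Vcong G \<alpha> (d \<alpha>) `` {\<alpha>}"
  have T: "D' \<in> Tset G" unfolding D'_def using T_of ad by (metis order_less_irrefl)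
  have "D' \<subseteq> Jd" unfolding D'_def using VR R(2) by blast
  moreover have "h1 \<alpha> \<in> J" unfolding Hull_def by (intro CollectI exI[of _ 0] exI[of _ 1]) (simp add: h1ge)
  moreover have "h1 \<alpha> \<notin> Jd"
  proof
    assume "h1 \<alpha> \<in> Jd"
    then obtain n m where "h1 \<alpha> \<le> (d ^^ m) \<alpha>" unfolding Jd_def Hull_def by blast
    thus False using lt[of m] by simp
  qed
  ultimately have "D' \<subset> Dl" using JdJ Dl_J by blast
  thus False using Dl_min T by blast
qed

end


context bk begin

definition zp :: "int \<Rightarrow> 'a \<Rightarrow> 'a" where
  "zp m = (if 0 \<le> m then h1 ^^ nat m else inv h1 ^^ nat (- m))"

lemma zpE: "zp m \<in> E" unfolding zp_def using h1E h1iE by simp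

lemma zp0: "zp 0 x = x" unfolding zp_def by simp

lemma zp_succ: "zp (m + 1) x = h1 (zp m x)"
proof (cases "0 \<le> m")
  case True
  hence "nat (m + 1) = Suc (nat m)" by simp
  thus ?thesis using True unfolding zp_def by simp
next
  case False
  define k where "k = nat (- m - 1)"
  have m: "nat (- m) = Suc k" using False k_def by simp
  have "zp (m + 1) x = (inv h1 ^^ k) x"
  proof (cases "0 \<le> m + 1")
    case True hence "m = -1" using False by simp
    thus ?thesis using k_def unfolding zp_def by simp
  next
    case False2: False
    hence "nat (- (m + 1)) = k" using k_def by simp
    thus ?thesis using False2 unfolding zp_def by simp
  qed
  moreover have "zp m x = inv h1 ((inv h1 ^^ k) x)" using False m unfolding zp_def by simp
  ultimately show ?thesis using h1G by simp
qed

lemma zp_pred: "zp (m - 1) x = inv h1 (zp m x)"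
  using zp_succ[of "m - 1" x] h1G by simp

lemma zp_add: "zp (a + b) x = zp a (zp b x)"
proof (induct a rule: int_induct[where k=0])
  case base thus ?case using zp0 by simp
next
  case (step1 i)
  have "zp (i + 1 + b) x = zp ((i + b) + 1) x" by (rule arg_cong[where f="\<lambda>t. zp t x"]) linarith
  also have "\<dots> = h1 (zp i (zp b x))" using zp_succ step1 by simp
  also have "\<dots> = zp (i + 1) (zp b x)" using zp_succ by simp
  finally show ?case .
next
  case (step2 i)
  have "zp (i - 1 + b) x = zp ((i + b) - 1) x" by (rule arg_cong[where f="\<lambda>t. zp t x"]) linarith
  also have "\<dots> = inv h1 (zp i (zp b x))" using zp_pred step2 by simp
  also have "\<dots> = zp (i - 1) (zp b x)" using zp_pred by simp
  finally show ?case .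
qed

lemma zp_pow: "(zp m ^^ n) x = zp (m * int n) x"
proof (induct n)
  case 0 thus ?case using zp0 by simp
next
  case (Suc n)
  have "(zp m ^^ Suc n) x = zp m (zp (m * int n) x)" using Suc by simp
  also have "\<dots> = zp (m + m * int n) x" using zp_add by simp
  finally show ?case by (simp add: algebra_simps)
qed

lemma zp_gt: assumes y: "y \<in> J" and c: "0 < c" shows "y < zp c y"
proof -
  obtain k where k: "nat c = Suc k" using c by (metis gr0_implies_Suc zero_less_nat_eq)
  have "zp c y = h1 ((h1 ^^ k) y)" using c k unfolding zp_def by simp
  moreover have "y \<le> (h1 ^^ k) y" using h1_pow_mono[of 0 y k] by simp
  hence "h1 y \<le> h1 ((h1 ^^ k) y)" using le_iff[OF h1G] by blast
  ultimately show ?thesis using J_supp[OF y] by simp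
qed

lemma zp_strict: assumes "a < b" shows "zp a \<alpha> < zp b \<alpha>"
proof -
  have "zp b \<alpha> = zp (b - a) (zp a \<alpha>)" using zp_add[of "b - a" a \<alpha>] by simp
  moreover have "zp a \<alpha> \<in> J" using E_J[OF zpE Hull_self] .
  ultimately show ?thesis using zp_gt assms by simp
qed

lemma zp_le_iff: "zp a \<alpha> \<le> zp b \<alpha> \<longleftrightarrow> a \<le> b"
  using zp_strict by (metis linorder_not_le order_less_le_trans less_irrefl order_le_less)

lemma comm_pt: "e \<in> E \<Longrightarrow> e' \<in> E \<Longrightarrow> e (e' x) = e' (e x)"
  using fun_cong[OF E_comm] by simp

lemma le_E: assumes "e \<in> E" "e' \<in> E" "c \<in> E" "e \<alpha> \<le> e' \<alpha>" shows "e (c \<alpha>) \<le> e' (c \<alpha>)"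
  using assms comm_pt[of e c] comm_pt[of e' c] le_iff[OF E_G[OF assms(3)]] by metis

lemma comp_le: assumes "e1 \<in> E" "e2 \<in> E" "e3 \<in> E" "e4 \<in> E" "e1 \<alpha> \<le> e2 \<alpha>" "e3 \<alpha> \<le> e4 \<alpha>"
  shows "e1 (e3 \<alpha>) \<le> e2 (e4 \<alpha>)"
proof -
  have "e1 (e3 \<alpha>) \<le> e1 (e4 \<alpha>)" using le_iff[OF E_G[OF assms(1)]] assms(6) by blast
  also have "\<dots> \<le> e2 (e4 \<alpha>)" using le_E[OF assms(1,2,4,5)] .
  finally show ?thesis .
qed

lemma pow_le: assumes "e \<in> E" "e' \<in> E" "e \<alpha> \<le> e' \<alpha>" shows "(e ^^ n) \<alpha> \<le> (e' ^^ n) \<alpha>"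
proof (induct n)
  case 0 thus ?case by simp
next
  case (Suc n)
  have "e ((e ^^ n) \<alpha>) \<le> e' ((e' ^^ n) \<alpha>)"
    using comp_le[OF assms(1,2) E_pow[OF assms(1)] E_pow[OF assms(2)] assms(3) Suc] .
  thus ?case by simp
qed

definition Sset :: "('a \<Rightarrow> 'a) \<Rightarrow> real set" where
  "Sset k = {real_of_int m / real n | m n. 0 < n \<and> zp m \<alpha> \<le> (k ^^ n) \<alpha>}"

definition phi :: "('a \<Rightarrow> 'a) \<Rightarrow> real" where
  "phi k = Sup (Sset k)"

lemma pow_J: "k \<in> E \<Longrightarrow> (k ^^ n) \<alpha> \<in> J"
  using E_J[OF E_pow Hull_self] by blast

lemma floor_ex: assumes k: "k \<in> E"
  shows "\<exists>m. zp m \<alpha> \<le> (k ^^ n) \<alpha> \<and> (k ^^ n) \<alpha> < zp (m + 1) \<alpha>"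
proof -
  define y where "y = (k ^^ n) \<alpha>"
  have "y \<in> J" using pow_J[OF k] y_def by simp
  then obtain a b where ab: "(inv h1 ^^ a) \<alpha> \<le> y" "y \<le> (h1 ^^ b) \<alpha>" unfolding Hull_def by blast
  define N where "N = int (max a b)"
  have lo: "zp (- N) \<alpha> \<le> y"
  proof -
    have "zp (- N) \<alpha> \<le> zp (- int a) \<alpha>" using zp_le_iff N_def by simp
    moreover have "zp (- int a) \<alpha> = (inv h1 ^^ a) \<alpha>" unfolding zp_def by (cases "a = 0") auto
    ultimately show ?thesis using ab(1) by simp
  qed
  have hi: "y \<le> zp N \<alpha>"
  proof -
    have "zp (int b) \<alpha> \<le> zp N \<alpha>" using zp_le_iff N_def by simp
    moreover have "zp (int b) \<alpha> = (h1 ^^ b) \<alpha>" unfolding zp_def by simp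
    ultimately show ?thesis using ab(2) by simp
  qed
  define M where "M = {m. - N \<le> m \<and> m \<le> N \<and> zp m \<alpha> \<le> y}"
  have fin: "finite M" unfolding M_def by (rule finite_subset[of _ "{-N..N}"]) auto
  have ne: "- N \<in> M" unfolding M_def using lo N_def by simp
  define m0 where "m0 = Max M"
  have m0M: "m0 \<in> M" unfolding m0_def using fin ne Max_in by blast
  have "y < zp (m0 + 1) \<alpha>"
  proof (rule ccontr)
    assume "\<not> y < zp (m0 + 1) \<alpha>"
    hence le: "zp (m0 + 1) \<alpha> \<le> y" by simp
    hence "m0 + 1 \<le> N" using hi zp_le_iff by (meson order_trans)
    hence "m0 + 1 \<in> M" unfolding M_def using le m0M M_def by simp
    hence "m0 + 1 \<le> m0" unfolding m0_def using fin Max_ge by blast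
    thus False by simp
  qed
  thus ?thesis using m0M unfolding M_def y_def by blast
qed

lemma upper_le: assumes k: "k \<in> E" and n: "0 < n" "0 < n'"
  and a: "zp m \<alpha> \<le> (k ^^ n) \<alpha>" and b: "(k ^^ n') \<alpha> \<le> zp m' \<alpha>"
  shows "real_of_int m / real n \<le> real_of_int m' / real n'"
proof -
  have "((zp m) ^^ n') \<alpha> \<le> ((k ^^ n) ^^ n') \<alpha>" using pow_le[OF zpE E_pow[OF k] a] .
  hence 1: "zp (m * int n') \<alpha> \<le> (k ^^ (n * n')) \<alpha>" using zp_pow by (simp add: funpow_mult)
  have "((k ^^ n') ^^ n) \<alpha> \<le> ((zp m') ^^ n) \<alpha>" using pow_le[OF E_pow[OF k] zpE b] .
  hence 2: "(k ^^ (n * n')) \<alpha> \<le> zp (m' * int n) \<alpha>" using zp_pow by (simp add: funpow_mult mult.commute)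
  have "m * int n' \<le> m' * int n" using order_trans[OF 1 2] zp_le_iff by blast
  hence "real_of_int m * real n' \<le> real_of_int m' * real n"
    by (metis of_int_le_iff of_int_mult of_int_of_nat_eq)
  thus ?thesis using n by (simp add: divide_simps)
qed

lemma Sset_ne: "k \<in> E \<Longrightarrow> Sset k \<noteq> {}"
proof -
  assume k: "k \<in> E"
  obtain m where "zp m \<alpha> \<le> (k ^^ 1) \<alpha>" using floor_ex[OF k, of 1] by blast
  thus ?thesis unfolding Sset_def by blast
qed

lemma Sset_bound: assumes k: "k \<in> E" and n: "0 < n" and b: "(k ^^ n) \<alpha> \<le> zp m' \<alpha>"
  shows "\<forall>s\<in>Sset k. s \<le> real_of_int m' / real n"
  unfolding Sset_def using upper_le[OF k _ n _ b] by blast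

lemma Sset_bdd: assumes k: "k \<in> E" shows "bdd_above (Sset k)"
proof -
  obtain m where "(k ^^ 1) \<alpha> < zp (m + 1) \<alpha>" using floor_ex[OF k, of 1] by blast
  thus ?thesis using Sset_bound[OF k, of 1 "m + 1"] unfolding bdd_above_def by (meson less_imp_le zero_less_one)
qed

lemma phi_ge: assumes k: "k \<in> E" and n: "0 < n" and a: "zp m \<alpha> \<le> (k ^^ n) \<alpha>"
  shows "real_of_int m / real n \<le> phi k"
  unfolding phi_def by (rule cSup_upper[OF _ Sset_bdd[OF k]]) (use n a in \<open>auto simp: Sset_def\<close>)

lemma phi_le: assumes k: "k \<in> E" and n: "0 < n" and b: "(k ^^ n) \<alpha> \<le> zp m \<alpha>"
  shows "phi k \<le> real_of_int m / real n"
  unfolding phi_def using cSup_least[OF Sset_ne[OF k]] Sset_bound[OF k n b] by blast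

lemma small_real: assumes "\<And>n::nat. 0 < n \<Longrightarrow> \<bar>x\<bar> \<le> 2 / real n" shows "x = (0::real)"
proof (rule ccontr)
  assume "x \<noteq> 0"
  hence p: "0 < \<bar>x\<bar>" by simp
  obtain n :: nat where n: "2 / \<bar>x\<bar> < real n" using reals_Archimedean2 by blast
  hence "0 < n" using p by (metis divide_pos_pos less_trans of_nat_0_less_iff zero_less_numeral)
  hence "\<bar>x\<bar> \<le> 2 / real n" using assms by blast
  hence "\<bar>x\<bar> * real n \<le> 2" using \<open>0 < n\<close> by (simp add: field_simps)
  moreover have "2 < \<bar>x\<bar> * real n" using n p by (simp add: field_simps)
  ultimately show False by simp
qed

lemma phi_add: assumes k: "k \<in> E" and k': "k' \<in> E" shows "phi (k \<circ> k') = phi k + phi k'"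
proof -
  have kk: "k \<circ> k' \<in> E" using E_comp[OF k k'] .
  have pw: "((k \<circ> k') ^^ n) \<alpha> = (k ^^ n) ((k' ^^ n) \<alpha>)" for n
    using funpow_comp_comm[OF E_comm[OF k k'], of n] by simp
  have "\<bar>phi (k \<circ> k') - (phi k + phi k')\<bar> \<le> 2 / real n" if n: "0 < n" for n
  proof -
    obtain m where m: "zp m \<alpha> \<le> (k ^^ n) \<alpha>" "(k ^^ n) \<alpha> < zp (m + 1) \<alpha>" using floor_ex[OF k] by blast
    obtain m' where m': "zp m' \<alpha> \<le> (k' ^^ n) \<alpha>" "(k' ^^ n) \<alpha> < zp (m' + 1) \<alpha>" using floor_ex[OF k'] by blast
    have "zp m (zp m' \<alpha>) \<le> (k ^^ n) ((k' ^^ n) \<alpha>)"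
      using comp_le[OF zpE E_pow[OF k] zpE E_pow[OF k'] m(1) m'(1)] .
    hence l: "zp (m + m') \<alpha> \<le> ((k \<circ> k') ^^ n) \<alpha>" using zp_add pw by simp
    have "(k ^^ n) ((k' ^^ n) \<alpha>) \<le> zp (m + 1) (zp (m' + 1) \<alpha>)"
      using comp_le[OF E_pow[OF k] zpE E_pow[OF k'] zpE] m(2) m'(2) by (meson less_imp_le)
    hence u: "((k \<circ> k') ^^ n) \<alpha> \<le> zp (m + m' + 2) \<alpha>" using zp_add[of "m + 1" "m' + 1"] pw
      by (simp add: ac_simps)
    have 1: "real_of_int (m + m') / real n \<le> phi (k \<circ> k')" using phi_ge[OF kk n l] .
    have 2: "phi (k \<circ> k') \<le> real_of_int (m + m' + 2) / real n" using phi_le[OF kk n u] .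
    have 3: "real_of_int m / real n \<le> phi k" using phi_ge[OF k n m(1)] .
    have 4: "phi k \<le> real_of_int (m + 1) / real n" using phi_le[OF k n less_imp_le[OF m(2)]] .
    have 5: "real_of_int m' / real n \<le> phi k'" using phi_ge[OF k' n m'(1)] .
    have 6: "phi k' \<le> real_of_int (m' + 1) / real n" using phi_le[OF k' n less_imp_le[OF m'(2)]] .
    have rn: "0 < real n" using n by simp
    have e1: "real_of_int (m + m') / real n = real_of_int m / real n + real_of_int m' / real n"
      by (simp add: add_divide_distrib)
    have e2: "real_of_int (m + m' + 2) / real n = real_of_int m / real n + real_of_int m' / real n + 2 / real n"
      by (simp add: add_divide_distrib)
    have e3: "real_of_int (m + 1) / real n = real_of_int m / real n + 1 / real n"
      by (simp add: add_divide_distrib)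
    have e4: "real_of_int (m' + 1) / real n = real_of_int m' / real n + 1 / real n"
      by (simp add: add_divide_distrib)
    have e5: "2 / real n = 1 / real n + 1 / real n" by simp
    have u1: "phi (k \<circ> k') - (phi k + phi k') \<le> 2 / real n" using 1 2 3 4 5 6 e1 e2 e3 e4 e5 by linarith
    have u2: "- (phi (k \<circ> k') - (phi k + phi k')) \<le> 2 / real n" using 1 2 3 4 5 6 e1 e2 e3 e4 e5 by linarith
    show ?thesis using u1 u2 by (rule abs_leI)
  qed
  thus ?thesis using small_real[of "phi (k \<circ> k') - (phi k + phi k')"] by simp
qed

lemma phi_zero: assumes d: "d \<in> E" and "d \<alpha> = \<alpha>" shows "phi d = 0"
proof -
  have "(d ^^ 1) \<alpha> = zp 0 \<alpha>" using assms zp0 by simp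
  hence "real_of_int 0 / real (1::nat) \<le> phi d" "phi d \<le> real_of_int 0 / real (1::nat)"
    using phi_ge[OF d, of 1 0] phi_le[OF d, of 1 0] by auto
  thus ?thesis by simp
qed

lemma phi_pos: assumes d: "d \<in> E" and ad: "\<alpha> < d \<alpha>" shows "0 < phi d"
proof -
  obtain n where n: "h1 \<alpha> \<le> (d ^^ n) \<alpha>" using arch[OF d ad] by blast
  have "n \<noteq> 0"
  proof
    assume "n = 0" hence "h1 \<alpha> \<le> \<alpha>" using n by simp
    thus False using h1ge[of \<alpha>] h1a by simp
  qed
  hence n0: "0 < n" by simp
  have "zp 1 \<alpha> = h1 \<alpha>" unfolding zp_def by simp
  hence "real_of_int 1 / real n \<le> phi d" using phi_ge[OF d n0, of 1] n by simp
  moreover have "0 < real_of_int 1 / real n" using n0 by simp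
  ultimately show ?thesis by linarith
qed

lemma diff_E: assumes k: "k \<in> E" and k': "k' \<in> E"
  shows "inv k \<circ> k' \<in> E" "k \<circ> (inv k \<circ> k') = k'"
  using E_comp[OF E_inv[OF k] k'] inv2[OF E_G[OF k]] by (auto simp: fun_eq_iff)

lemma phi_strict: assumes k: "k \<in> E" and k': "k' \<in> E" and lt: "k \<alpha> < k' \<alpha>" shows "phi k < phi k'"
proof -
  note d = diff_E[OF k k']
  have "\<alpha> < (inv k \<circ> k') \<alpha>" using lt less_iff[OF E_G[OF k], of \<alpha> "inv k (k' \<alpha>)"] inv2[OF E_G[OF k]] by simp
  hence "0 < phi (inv k \<circ> k')" using phi_pos[OF d(1)] by blast
  moreover have "phi k' = phi k + phi (inv k \<circ> k')" using phi_add[OF k d(1)] d(2) by simp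
  ultimately show ?thesis by simp
qed

lemma phi_eq: assumes k: "k \<in> E" and k': "k' \<in> E" and eq: "k \<alpha> = k' \<alpha>" shows "phi k = phi k'"
proof -
  note d = diff_E[OF k k']
  have "inv k (k \<alpha>) = \<alpha>" by (rule inv1[OF E_G[OF k]])
  hence "(inv k \<circ> k') \<alpha> = \<alpha>" using eq by simp
  hence "phi (inv k \<circ> k') = 0" using phi_zero[OF d(1)] by blast
  moreover have "phi k' = phi k + phi (inv k \<circ> k')" using phi_add[OF k d(1)] d(2) by simp
  ultimately show ?thesis by simp
qed

definition eps :: "'a \<Rightarrow> 'a \<Rightarrow> 'a" where "eps y = (SOME e. e \<in> E \<and> e \<alpha> = y)"

lemma eps: assumes "y \<in> J" shows "eps y \<in> E" "eps y \<alpha> = y"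
proof -
  have "\<exists>e. e \<in> E \<and> e \<alpha> = y" using orbit_Hull[OF assms] by blast
  hence "eps y \<in> E \<and> eps y \<alpha> = y" unfolding eps_def by (rule someI_ex)
  thus "eps y \<in> E" "eps y \<alpha> = y" by auto
qed

definition Phi where "Phi y = phi (eps y)"

lemma Phi_less: assumes "y \<in> J" "w \<in> J" shows "y < w \<longleftrightarrow> Phi y < Phi w"
proof
  assume "y < w" thus "Phi y < Phi w" unfolding Phi_def using phi_strict eps assms by metis
next
  assume a: "Phi y < Phi w"
  show "y < w"
  proof (rule ccontr)
    assume "\<not> y < w"
    hence "w < y \<or> w = y" by auto
    thus False
    proof
      assume "w < y" hence "Phi w < Phi y" unfolding Phi_def using phi_strict eps assms by metis
      thus False using a by simp
    next
      assume "w = y" thus False using a by simp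
    qed
  qed
qed

lemma Phi_E: assumes e: "e \<in> E" and y: "y \<in> J" shows "Phi (e y) = phi e + Phi y"
proof -
  have ey: "e y \<in> J" using E_J[OF e y] .
  have "eps (e y) \<alpha> = (e \<circ> eps y) \<alpha>" using eps[OF ey] eps[OF y] by simp
  hence "phi (eps (e y)) = phi (e \<circ> eps y)" using phi_eq eps(1)[OF ey] E_comp[OF e eps(1)[OF y]] by blast
  thus ?thesis unfolding Phi_def using phi_add[OF e eps(1)[OF y]] by simp
qed

lemma Phi_alpha: "Phi \<alpha> = 0"
  unfolding Phi_def using phi_zero eps Hull_self by blast

lemma Phi_G: assumes g: "g \<in> G" "g ` J = J" and x: "x \<in> J" shows "g x \<in> J" "Phi (g x) = Phi x + Phi (g \<alpha>)"
proof -
  show gx: "g x \<in> J" using g x by blast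
  have ga: "g \<alpha> \<in> J" using g Hull_self by blast
  have "g x = eps (g \<alpha>) x" using agree[OF g(1) E_G[OF eps(1)[OF ga]] Hull_self _ x] eps(2)[OF ga] by simp
  hence "Phi (g x) = phi (eps (g \<alpha>)) + Phi x" using Phi_E[OF eps(1)[OF ga] x] by simp
  thus "Phi (g x) = Phi x + Phi (g \<alpha>)" unfolding Phi_def by simp
qed

lemma typeI_Dl: "type_I (piset G Dl) set_less (induced_grp G Dl)"
proof -
  have P: "piset G Dl = {{x} | x. x \<in> J}" using piset_min[OF Dl_T Dl_min] Dl_J by simp
  have Pm: "\<exists>x. C = {x} \<and> x \<in> J" if "C \<in> piset G Dl" for C using that unfolding P by blast
  have Pi: "{x} \<in> piset G Dl" if "x \<in> J" for x unfolding P using that by blast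
  define A where "A = Phi ` J"
  define psi where "psi = (\<lambda>C. Phi (the_elem C))"
  have psi: "psi {x} = Phi x" for x unfolding psi_def by simp
  have A0: "0 \<in> A" unfolding A_def using Phi_alpha Hull_self by force
  have Aadd: "\<forall>a\<in>A. \<forall>b\<in>A. a + b \<in> A"
  proof (intro ballI)
    fix a b assume "a \<in> A" "b \<in> A"
    then obtain y w where yw: "y \<in> J" "w \<in> J" "a = Phi y" "b = Phi w" unfolding A_def by blast
    have "Phi (eps y w) = Phi y + Phi w" using Phi_E[OF eps(1)[OF yw(1)] yw(2)] unfolding Phi_def by simp
    moreover have "eps y w \<in> J" using E_J[OF eps(1)[OF yw(1)] yw(2)] .
    ultimately show "a + b \<in> A" unfolding A_def using yw by force
  qed
  have Aneg: "\<forall>a\<in>A. - a \<in> A"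
  proof
    fix a assume "a \<in> A"
    then obtain y where y: "y \<in> J" "a = Phi y" unfolding A_def by blast
    define v where "v = inv (eps y) \<alpha>"
    have vJ: "v \<in> J" unfolding v_def using E_J[OF E_inv[OF eps(1)[OF y(1)]] Hull_self] .
    have "eps y v = \<alpha>" unfolding v_def using inv2[OF E_G[OF eps(1)[OF y(1)]]] by simp
    hence "0 = Phi y + Phi v" using Phi_E[OF eps(1)[OF y(1)] vJ] Phi_alpha unfolding Phi_def by simp
    hence "- a = Phi v" using y by simp
    thus "- a \<in> A" unfolding A_def using vJ by blast
  qed
  have bij: "bij_betw psi (piset G Dl) A"
  proof (rule bij_betwI')
    fix C D assume "C \<in> piset G Dl" "D \<in> piset G Dl"
    then obtain x y where xy: "C = {x}" "D = {y}" "x \<in> J" "y \<in> J" using Pm by meson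
    show "(psi C = psi D) = (C = D)"
    proof
      assume "psi C = psi D"
      hence "Phi x = Phi y" using xy psi by simp
      hence "\<not> x < y" "\<not> y < x" using Phi_less[OF xy(3,4)] Phi_less[OF xy(4,3)] by auto
      thus "C = D" using xy by simp
    qed simp
  next
    fix C assume "C \<in> piset G Dl"
    then obtain x where "C = {x}" "x \<in> J" using Pm by meson
    thus "psi C \<in> A" using psi A_def by simp
  next
    fix a assume "a \<in> A"
    then obtain x where x: "x \<in> J" "a = Phi x" unfolding A_def by blast
    have "{x} \<in> piset G Dl" using Pi x by blast
    thus "\<exists>C\<in>piset G Dl. a = psi C" using psi x by (intro bexI[of _ "{x}"]) auto
  qed
  have ord: "\<forall>C\<in>piset G Dl. \<forall>D\<in>piset G Dl. set_less C D \<longleftrightarrow> psi C < psi D"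
  proof (intro ballI)
    fix C D assume "C \<in> piset G Dl" "D \<in> piset G Dl"
    then obtain x y where xy: "C = {x}" "D = {y}" "x \<in> J" "y \<in> J" using Pm by meson
    have "set_less C D \<longleftrightarrow> x < y" unfolding set_less_def using xy by auto
    thus "set_less C D \<longleftrightarrow> psi C < psi D" using Phi_less[OF xy(3,4)] psi xy by simp
  qed
  have tr1: "\<forall>f\<in>induced_grp G Dl. \<exists>a\<in>A. \<forall>C\<in>piset G Dl. f C \<in> piset G Dl \<and> psi (f C) = psi C + a"
  proof
    fix f assume "f \<in> induced_grp G Dl"
    then obtain g where g0: "f = restrict (\<lambda>C. g ` C) (piset G Dl)" "g \<in> stab G Dl"
      unfolding induced_grp_def by blast
    hence g: "f = restrict (\<lambda>C. g ` C) (piset G Dl)" "g \<in> G" "g ` J = J"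
      unfolding stab_def using Dl_J by auto
    have "Phi (g \<alpha>) \<in> A" unfolding A_def using g Hull_self by blast
    moreover have "\<forall>C\<in>piset G Dl. f C \<in> piset G Dl \<and> psi (f C) = psi C + Phi (g \<alpha>)"
    proof
      fix C assume C: "C \<in> piset G Dl"
      then obtain x where x: "C = {x}" "x \<in> J" using Pm by meson
      have fC: "f C = {g x}" using g(1) C x by simp
      show "f C \<in> piset G Dl \<and> psi (f C) = psi C + Phi (g \<alpha>)"
        using Phi_G[OF g(2,3) x(2)] fC Pi psi x by auto
    qed
    ultimately show "\<exists>a\<in>A. \<forall>C\<in>piset G Dl. f C \<in> piset G Dl \<and> psi (f C) = psi C + a" by blast
  qed
  have tr2: "\<forall>a\<in>A. \<exists>f\<in>induced_grp G Dl. \<forall>C\<in>piset G Dl. f C \<in> piset G Dl \<and> psi (f C) = psi C + a"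
  proof
    fix a assume "a \<in> A"
    then obtain w where w: "w \<in> J" "a = Phi w" unfolding A_def by blast
    define g where "g = eps w"
    have gE: "g \<in> E" using eps(1)[OF w(1)] g_def by simp
    have gst: "g \<in> stab G Dl" unfolding stab_def using E_G[OF gE] E_Jimg[OF gE] Dl_J by simp
    define f where "f = restrict (\<lambda>C. g ` C) (piset G Dl)"
    have "f \<in> induced_grp G Dl" unfolding f_def induced_grp_def using gst by blast
    moreover have "\<forall>C\<in>piset G Dl. f C \<in> piset G Dl \<and> psi (f C) = psi C + a"
    proof
      fix C assume C: "C \<in> piset G Dl"
      then obtain x where x: "C = {x}" "x \<in> J" using Pm by meson
      have fC: "f C = {g x}" unfolding f_def using C x by simp
      have "Phi (g x) = phi g + Phi x" using Phi_E[OF gE x(2)] .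
      moreover have "phi g = a" using w g_def Phi_def by simp
      moreover have "g x \<in> J" using E_J[OF gE x(2)] .
      ultimately show "f C \<in> piset G Dl \<and> psi (f C) = psi C + a" using fC Pi psi x by auto
    qed
    ultimately show "\<exists>f\<in>induced_grp G Dl. \<forall>C\<in>piset G Dl. f C \<in> piset G Dl \<and> psi (f C) = psi C + a"
      by blast
  qed
  show ?thesis unfolding type_I_def
    by (rule exI[of _ A], rule exI[of _ psi]) (use A0 Aadd Aneg bij ord tr1 tr2 in blast)
qed

end


theorem lemma5p5:
  fixes G :: "('a::linorder \<Rightarrow> 'a) set"
  assumes "l_perm_group G" and "transitive_grp G" and "ample G"
  shows "(\<exists>\<Delta>\<in>Tset G. (\<forall>\<Delta>'\<in>Tset G. \<not> \<Delta>' \<subset> \<Delta>) \<and>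
            type_I (piset G \<Delta>) set_less (induced_grp G \<Delta>))
     \<longleftrightarrow> (\<exists>h1\<in>G. pw_le id h1 \<and> h1 \<noteq> id \<and>
            (\<forall>a\<in>G. \<forall>b\<in>G. pw_le (pw_join (pw_abs a) (pw_abs b)) h1 \<longrightarrow> a \<circ> b = b \<circ> a))"
proof -
  interpret lpg G using assms(1,2) by unfold_locales
  show ?thesis
  proof
    assume "\<exists>\<Delta>\<in>Tset G. (\<forall>\<Delta>'\<in>Tset G. \<not> \<Delta>' \<subset> \<Delta>) \<and>
            type_I (piset G \<Delta>) set_less (induced_grp G \<Delta>)"
    then obtain \<Delta> where "\<Delta> \<in> Tset G" "\<forall>\<Delta>'\<in>Tset G. \<not> \<Delta>' \<subset> \<Delta>"
      "type_I (piset G \<Delta>) set_less (induced_grp G \<Delta>)" by blast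
    thus "\<exists>h1\<in>G. pw_le id h1 \<and> h1 \<noteq> id \<and>
            (\<forall>a\<in>G. \<forall>b\<in>G. pw_le (pw_join (pw_abs a) (pw_abs b)) h1 \<longrightarrow> a \<circ> b = b \<circ> a)"
      using forward[OF assms(3)] by blast
  next
    assume "\<exists>h1\<in>G. pw_le id h1 \<and> h1 \<noteq> id \<and>
            (\<forall>a\<in>G. \<forall>b\<in>G. pw_le (pw_join (pw_abs a) (pw_abs b)) h1 \<longrightarrow> a \<circ> b = b \<circ> a)"
    then obtain h1 where h1: "h1 \<in> G" "pw_le id h1" "h1 \<noteq> id"
      "\<forall>a\<in>G. \<forall>b\<in>G. pw_le (pw_join (pw_abs a) (pw_abs b)) h1 \<longrightarrow> a \<circ> b = b \<circ> a" by blast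
    obtain \<alpha> where a: "h1 \<alpha> \<noteq> \<alpha>" using h1(3) by (auto simp: fun_eq_iff)
    interpret bk G h1 \<alpha>
      by unfold_locales (use h1 a assms(3) in \<open>auto simp: pw_le_def\<close>)
    show "\<exists>\<Delta>\<in>Tset G. (\<forall>\<Delta>'\<in>Tset G. \<not> \<Delta>' \<subset> \<Delta>) \<and>
            type_I (piset G \<Delta>) set_less (induced_grp G \<Delta>)"
      using Dl_T Dl_min typeI_Dl by blast
  qed
qed


end
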